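(* Let $\mathrm{T}_\infty$ be the random infinite binary plane tree, with its corner labelling $S$ and total order $\prec$ on corners, defined in the context. Then almost surely, for every corner $\kappa$ of $\mathrm{T}_\infty$ there exists a corner $\kappa'$ with $\kappa\prec\kappa'$ and $$S(\kappa')\le S(\kappa)-6\cdot\mathbf 1\{\kappa\prec\rho\preceq\kappa'\}.$$ In particular, almost surely no bud corner $\kappa$ of $\mathrm{T}_\infty$ has $\sigma(\kappa)=-\infty$.
   Context: Plane trees. A plane tree is a rooted tree with a linear order on the children of each node. Such a tree is viewed as a planar map. A binary (plane) tree is one in which every node has degree $1$ (a bud) or degree $3$ (an internal node). A corner is a pair $(e,e')$ of edges such that $e'$ immediately follows $e$ in the counterclockwise walk around the unique face of the tree. This walk keeps the face on its left. The corner's vertex is the common endpoint of $e$ and $e'$. A bud corner is a corner at a bud; every other corner is an internal corner. The root corner $\rho$ is the corner at the root vertex whose second edge is the root edge. The complete binary tree. Let $\mathbb T$ be the complete infinite binary tree with vertex set $\bigcup_{i\ge0}\{-1,1\}^i$. Its root is the empty string $\emptyset$. The left child of $w$ is $w(-1)$ and the right child is $w1$. Let $A\subseteq\mathbb T$ be a subtree containing $\emptyset$ in which every node has $0$ or $2$ children, and in which $\emptyset$ has $2$ children. Then $A$ determines a binary plane tree $\mathrm T(A)$ as follows: - delete $\emptyset$ and join $1$ and $-1$ by an edge; - the root is $1$ and the root edge is $(1,-1)$; - the children of $1$ are, in order, $-1$, then $(1,-1)$ and $(1,1)$ if they are present in $A$; - every other node $w$ has children, in order, $w(-1)$ and $w1$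 if they are present in $A$. The random tree. Let $(X_i)_{i\ge1}$ be i.i.d. with $P(X_i=1)=P(X_i=-1)=1/2$, and set $Y_i=-X_i$. Let $P=\{(X_1,\dots,X_i):i\ge0\}$. Let $(B_i)_{i\ge1}$ be i.i.d. Galton–Watson trees, independent of the $X_i$, in which each node has $0$ or $2$ children with probability $1/2$ each. For each $i\ge1$, place a copy of $B_i$ in $\mathbb T$ rooted at the node $(X_1,\dots,X_{i-1},Y_i)$. Let $A$ be the union of $P$ and these copies, and let $\mathrm T_\infty=\mathrm T(A)$. This is a critical binary Galton–Watson tree conditioned to be infinite. Corner order and labels. The counterclockwise walk around $\mathrm T_\infty$ visits each corner exactly once, in a bi-infinite sequence. Write $\prec$ for the induced total order, where $\kappa\prec\kappa'$ means $\kappa$ is visited before $\kappa'$. For a corner $\kappa$, let $\delta(\kappa)=-1$ if $\kappa$ is internal and $\delta(\kappa)=3$ if $\kappa$ is a bud corner. The labelling $S$ is the unique function from corners to $\mathbb Z$ such that: - $S(\rho)=-4\cdot\mathbf 1\{\rho\text{ is a bud corner}\}$; - for every corner $\kappa$ with immediate successor $\kappa'$ in the walk, $S(\kappa')=S(\kappa)+\delta(\kappa)-6\cdot\mathbf 1\{\kappa'=\rho\}$. Attachment corners. For a bud corner $\kappa$, $\sigma(\kappa)$ is the $\prec$-first corner $\kappa'\succ\kappa$ with $S(\kappa')\le S(\kappa)-6\cdot\mathbf 1\{\kappa\prec\rho\preceq\kappa'\}$. If no such corner exists, $\sigma(\kappa)=-\infty$. *)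

theory Defs
  imports "HOL-Probability.Probability"
begin

text \<open>A vertex of the complete binary tree is a list of booleans; True encodes 1,
  False encodes -1; the list [] is the root (empty string). The left child of w is
  w @ [False], the right child is w @ [True].\<close>

text \<open>Vertices of T(A) are the nonempty lists in A. The root is [True] (the node 1).\<close>

definition children :: "bool list set \<Rightarrow> bool list \<Rightarrow> bool list list" where
  "children A v =
     (if v = [True]
      then [False] # (if [True, False] \<in> A then [[True, False], [True, True]] else [])
      else if v @ [False] \<in> A then [v @ [False], v @ [True]] else [])"

definition nch :: "bool list set \<Rightarrow> bool list \<Rightarrow> nat" where
  "nch A v = length (children A v)"

text \<open>Parent of a non-root vertex of T(A), and its (1-based) position among the
  children of the parent.\<close>
definition tparent :: "bool list \<Rightarrow> bool list" where
  "tparent v = (if v = [False] then [True] else butlast v)"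

definition cidx :: "bool list \<Rightarrow> nat" where
  "cidx v = (if v = [False] then 1
             else if butlast v = [True] then (if last v then 3 else 2)
             else (if last v then 2 else 1))"

definition tdegree :: "bool list set \<Rightarrow> bool list \<Rightarrow> nat" where
  "tdegree A v = (if v = [True] then nch A v else nch A v + 1)"

text \<open>For a non-root vertex v with children c_1..c_k, the corner (v, j),
  0 <= j <= k, is the corner between the edge to c_j (or the parent edge if j = 0)
  and the edge to c_(j+1) (or the parent edge if j = k). For the root with children
  c_1..c_k, the corner (root, j), 1 <= j <= k, is the corner between the edges to
  c_j and c_(j+1) (indices modulo k). A corner (e, e') is entered via e and left via e'.\<close>
definition corners :: "bool list set \<Rightarrow> (bool list \<times> nat) set" where
  "corners A = {(v, j). v \<in> A \<and> v \<noteq> [] \<and> j \<le> nch A v \<and> (v = [True] \<longrightarrow> 1 \<le> j)}"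

definition is_bud_corner :: "bool list set \<Rightarrow> bool list \<times> nat \<Rightarrow> bool" where
  "is_bud_corner A \<kappa> \<longleftrightarrow> \<kappa> \<in> corners A \<and> tdegree A (fst \<kappa>) = 1"

definition delta :: "bool list set \<Rightarrow> bool list \<times> nat \<Rightarrow> int" where
  "delta A \<kappa> = (if is_bud_corner A \<kappa> then 3 else -1)"

text \<open>The root corner: at the root, second edge = root edge (edge to c_1 = -1).\<close>
definition rho :: "bool list set \<Rightarrow> bool list \<times> nat" where
  "rho A = ([True], nch A [True])"

text \<open>Immediate successor of a corner in the counterclockwise contour walk.\<close>
definition csucc :: "bool list set \<Rightarrow> bool list \<times> nat \<Rightarrow> bool list \<times> nat" where
  "csucc A \<kappa> =
     (let v = fst \<kappa>; j = snd \<kappa>; cs = children A v; k = length cs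
      in if v = [True] then (cs ! (j mod k), 0)
         else if j < k then (cs ! j, 0)
         else (tparent v, cidx v))"

definition cprec :: "bool list set \<Rightarrow> bool list \<times> nat \<Rightarrow> bool list \<times> nat \<Rightarrow> bool" where
  "cprec A \<kappa> \<kappa>' \<longleftrightarrow> \<kappa> \<in> corners A \<and> \<kappa>' \<in> corners A \<and> (\<exists>n>0. (csucc A ^^ n) \<kappa> = \<kappa>')"

definition cpreceq :: "bool list set \<Rightarrow> bool list \<times> nat \<Rightarrow> bool list \<times> nat \<Rightarrow> bool" where
  "cpreceq A \<kappa> \<kappa>' \<longleftrightarrow> (\<kappa> = \<kappa>' \<and> \<kappa> \<in> corners A) \<or> cprec A \<kappa> \<kappa>'"

definition label :: "bool list set \<Rightarrow> bool list \<times> nat \<Rightarrow> int" where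
  "label A = (THE S. (\<forall>\<kappa>. \<kappa> \<notin> corners A \<longrightarrow> S \<kappa> = 0)
      \<and> S (rho A) = (if is_bud_corner A (rho A) then -4 else 0)
      \<and> (\<forall>\<kappa>\<in>corners A. S (csucc A \<kappa>) =
            S \<kappa> + delta A \<kappa> - (if csucc A \<kappa> = rho A then 6 else 0)))"

definition attach_cond :: "bool list set \<Rightarrow> bool list \<times> nat \<Rightarrow> bool list \<times> nat \<Rightarrow> bool" where
  "attach_cond A \<kappa> \<kappa>' \<longleftrightarrow> cprec A \<kappa> \<kappa>' \<and>
     label A \<kappa>' \<le> label A \<kappa> - (if cprec A \<kappa> (rho A) \<and> cpreceq A (rho A) \<kappa>' then 6 else 0)"

definition is_first_attach :: "bool list set \<Rightarrow> bool list \<times> nat \<Rightarrow> bool list \<times> nat \<Rightarrow> bool" where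
  "is_first_attach A \<kappa> \<kappa>' \<longleftrightarrow> attach_cond A \<kappa> \<kappa>' \<and>
     (\<forall>\<mu>. cprec A \<kappa> \<mu> \<and> cprec A \<mu> \<kappa>' \<longrightarrow> \<not> attach_cond A \<kappa> \<mu>)"

text \<open>sigma kappa; None represents -infinity.\<close>
definition attach_corner :: "bool list set \<Rightarrow> bool list \<times> nat \<Rightarrow> (bool list \<times> nat) option" where
  "attach_corner A \<kappa> = (if \<exists>\<kappa>'. is_first_attach A \<kappa> \<kappa>'
                 then Some (THE \<kappa>'. is_first_attach A \<kappa> \<kappa>') else None)"

text \<open>Sample space: independent fair coins. omega (Inl i) is X_i (True = +1), i >= 1;
  omega (Inr (i, u)) decides whether node u of the i-th Galton-Watson tree B_i has
  two children (True) or none (False).\<close>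
type_synonym omega = "nat + nat \<times> bool list \<Rightarrow> bool"

definition rt_space :: "omega measure" where
  "rt_space = PiM UNIV (\<lambda>_. measure_pmf (bernoulli_pmf (1/2)))"

definition Xv :: "omega \<Rightarrow> nat \<Rightarrow> bool" where
  "Xv \<omega> i = \<omega> (Inl i)"

definition spine :: "omega \<Rightarrow> bool list set" where
  "spine \<omega> = {map (Xv \<omega>) [1..<i+1] | i. True}"

text \<open>The Galton-Watson tree B_i: u belongs to B_i iff every proper prefix of u
  (every strict ancestor of u) has two children.\<close>
definition GW :: "omega \<Rightarrow> nat \<Rightarrow> bool list set" where
  "GW \<omega> i = {u. \<forall>k<length u. \<omega> (Inr (i, take k u))}"

definition Aset :: "omega \<Rightarrow> bool list set" where
  "Aset \<omega> = spine \<omega> \<union>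
     (\<Union>i\<in>{1..}. (\<lambda>u. map (Xv \<omega>) [1..<i] @ [\<not> Xv \<omega> i] @ u) ` GW \<omega> i)"

end

theory Submission
  imports Defs
begin

definition sp :: "omega \<Rightarrow> nat \<Rightarrow> bool list" where
  "sp \<omega> d = map (Xv \<omega>) [1..<d+1]"
definition gr :: "omega \<Rightarrow> nat \<Rightarrow> bool list" where
  "gr \<omega> i = sp \<omega> (i-1) @ [\<not> Xv \<omega> i]"

lemma sp_0[simp]: "sp \<omega> 0 = []" by (simp add: sp_def)
lemma sp_Suc: "sp \<omega> (Suc d) = sp \<omega> d @ [Xv \<omega> (Suc d)]" by (simp add: sp_def)
lemma length_sp[simp]: "length (sp \<omega> d) = d" by (simp add: sp_def)
lemma take_sp: "d \<le> e \<Longrightarrow> take d (sp \<omega> e) = sp \<omega> d"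
  by (simp add: sp_def take_map take_upt del: upt_Suc)
lemma nth_sp: "i < d \<Longrightarrow> sp \<omega> d ! i = Xv \<omega> (Suc i)"
  by (simp add: sp_def del: upt_Suc)
lemma length_gr[simp]: "1 \<le> i \<Longrightarrow> length (gr \<omega> i) = i" by (simp add: gr_def)
lemma sp_1: "sp \<omega> 1 = [Xv \<omega> 1]" by (simp add: sp_def)

lemma Aset_alt: "Aset \<omega> = range (sp \<omega>) \<union> (\<Union>i\<in>{1..}. (\<lambda>u. gr \<omega> i @ u) ` GW \<omega> i)"
proof -
  have "spine \<omega> = range (sp \<omega>)" by (auto simp: spine_def sp_def)
  moreover have "map (Xv \<omega>) [1..<i] = sp \<omega> (i-1)" if "1 \<le> i" for i
    using that by (simp add: sp_def)
  ultimately show ?thesis unfolding Aset_def gr_def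
    by (auto intro!: SUP_cong image_cong simp del: upt_Suc)
qed

lemma gr_ne_sp: "1 \<le> i \<Longrightarrow> gr \<omega> i @ u \<noteq> sp \<omega> n"
proof
  assume i: "1 \<le> i" and eq: "gr \<omega> i @ u = sp \<omega> n"
  have "i \<le> n" using arg_cong[OF eq, of length] i by simp
  have "take i (gr \<omega> i @ u) = gr \<omega> i" using i by simp
  hence "gr \<omega> i = sp \<omega> i" using eq take_sp[OF \<open>i \<le> n\<close>] by simp
  hence "gr \<omega> i ! (i-1) = sp \<omega> i ! (i-1)" by simp
  thus False using i by (simp add: gr_def nth_sp nth_append)
qed

lemma gr_inj: "1 \<le> i \<Longrightarrow> 1 \<le> j \<Longrightarrow> gr \<omega> i @ u = gr \<omega> j @ u' \<Longrightarrow> i = j \<and> u = u'"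
proof -
  assume i: "1 \<le> i" and j: "1 \<le> j" and eq: "gr \<omega> i @ u = gr \<omega> j @ u'"
  have "i = j"
  proof (rule ccontr)
    assume "i \<noteq> j"
    then consider "i < j" | "j < i" by linarith
    thus False
    proof cases
      case 1
      have "(gr \<omega> i @ u) ! (i-1) = (\<not> Xv \<omega> i)" using i by (simp add: gr_def nth_append)
      moreover have "(gr \<omega> j @ u') ! (i-1) = Xv \<omega> i"
      proof -
        have "i-1 < j-1" using 1 i by linarith
        thus ?thesis using nth_sp[of "i-1" "j-1" \<omega>] i by (simp add: gr_def nth_append)
      qed
      ultimately show False using eq by simp
    next
      case 2
      have "(gr \<omega> j @ u') ! (j-1) = (\<not> Xv \<omega> j)" using j by (simp add: gr_def nth_append)
      moreover have "(gr \<omega> i @ u) ! (j-1) = Xv \<omega> j"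
      proof -
        have "j-1 < i-1" using 2 j by linarith
        thus ?thesis using nth_sp[of "j-1" "i-1" \<omega>] j by (simp add: gr_def nth_append)
      qed
      ultimately show False using eq by simp
    qed
  qed
  thus ?thesis using eq by simp
qed

lemma mem_gr: "1 \<le> i \<Longrightarrow> gr \<omega> i @ u \<in> Aset \<omega> \<longleftrightarrow> u \<in> GW \<omega> i"
proof
  assume "gr \<omega> i @ u \<in> Aset \<omega>" "1 \<le> i"
  then obtain j u' where "1 \<le> j" "u' \<in> GW \<omega> j" "gr \<omega> i @ u = gr \<omega> j @ u'"
    unfolding Aset_alt using gr_ne_sp by blast
  thus "u \<in> GW \<omega> i" using gr_inj \<open>1 \<le> i\<close> by metis
qed (auto simp: Aset_alt)

lemma mem_sp[simp]: "sp \<omega> d \<in> Aset \<omega>"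
  unfolding Aset_alt by auto

lemma GW_Nil[simp]: "[] \<in> GW \<omega> i" by (simp add: GW_def)

lemma GW_snoc: "u @ [b] \<in> GW \<omega> i \<longleftrightarrow> u \<in> GW \<omega> i \<and> \<omega> (Inr (i, u))"
  by (auto simp: GW_def less_Suc_eq nth_append)

lemma mem_cases[consumes 1]:
  assumes "v \<in> Aset \<omega>"
  obtains d where "v = sp \<omega> d" | i u where "1 \<le> i" "u \<in> GW \<omega> i" "v = gr \<omega> i @ u"
  using assms unfolding Aset_alt by auto

lemma sp_snoc_mem: "sp \<omega> d @ [b] \<in> Aset \<omega>"
proof (cases "b = Xv \<omega> (Suc d)")
  case True thus ?thesis using mem_sp[of \<omega> "Suc d"] by (simp add: sp_Suc)
next
  case False
  hence "sp \<omega> d @ [b] = gr \<omega> (Suc d) @ []" by (auto simp: gr_def)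
  thus ?thesis using mem_gr[of "Suc d" \<omega> "[]"] by simp
qed

lemma binary: assumes "v \<in> Aset \<omega>" shows "v @ [b] \<in> Aset \<omega> \<longleftrightarrow> v @ [\<not> b] \<in> Aset \<omega>"
  using assms proof (cases rule: mem_cases)
  case (1 d) thus ?thesis using sp_snoc_mem by auto
next
  case (2 i u) thus ?thesis using mem_gr[of i \<omega>] GW_snoc by (metis append.assoc)
qed

lemma prefix_closed: assumes "v @ [b] \<in> Aset \<omega>" shows "v \<in> Aset \<omega>"
  using assms proof (cases rule: mem_cases)
  case (1 d)
  then obtain d' where "d = Suc d'" by (cases d) auto
  with 1 show ?thesis by (simp add: sp_Suc)
next
  case (2 i u)
  show ?thesis
  proof (cases "u = []")
    case True
    hence "v = sp \<omega> (i-1)" using 2 by (simp add: gr_def)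
    thus ?thesis by simp
  next
    case False
    then obtain u' c where u: "u = u' @ [c]" by (metis rev_exhaust)
    hence "v = gr \<omega> i @ u'" using 2 by simp
    moreover have "u' \<in> GW \<omega> i" using 2 u GW_snoc by auto
    ultimately show ?thesis using mem_gr 2 by auto
  qed
qed

lemma mem_single[simp]: "[b] \<in> Aset \<omega>"
  using sp_snoc_mem[of \<omega> 0 b] by simp

lemma mem_TT: "[True, b] \<in> Aset \<omega> \<longleftrightarrow> [True, False] \<in> Aset \<omega>"
  using binary[OF mem_single[of True \<omega>], of b] by (cases b) auto

lemma children_root: "children A [True] = [False] # (if [True, False] \<in> A then [[True, False], [True, True]] else [])"
  by (simp add: children_def)
lemma children_nonroot: "v \<noteq> [True] \<Longrightarrow> children A v = (if v @ [False] \<in> A then [v @ [False], v @ [True]] else [])"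
  by (simp add: children_def)
lemma nch_root: "nch A [True] = (if [True, False] \<in> A then 3 else 1)"
  by (simp add: nch_def children_def)
lemma nch_nonroot: "v \<noteq> [True] \<Longrightarrow> nch A v = (if v @ [False] \<in> A then 2 else 0)"
  by (simp add: nch_def children_def)

lemma tparent_snoc: "w \<noteq> [] \<Longrightarrow> tparent (w @ [b]) = w"
  by (auto simp: tparent_def)
lemma cidx_snoc: "w \<noteq> [] \<Longrightarrow> w \<noteq> [True] \<Longrightarrow> cidx (w @ [b]) = (if b then 2 else 1)"
  by (auto simp: cidx_def)
lemma cidx_TT: "cidx [True, b] = (if b then 3 else 2)" by (simp add: cidx_def)
lemma tparent_TT: "tparent [True, b] = [True]" by (simp add: tparent_def)
lemma cidx_F: "cidx [False] = 1" by (simp add: cidx_def)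
lemma tparent_F: "tparent [False] = [True]" by (simp add: tparent_def)

lemma nonempty_cases[consumes 1, case_names root F TT snoc]:
  assumes "v \<noteq> []"
  obtains "v = [True]" | "v = [False]" | b where "v = [True, b]"
    | w b where "v = w @ [b]" "w \<noteq> []" "w \<noteq> [True]"
proof -
  obtain w b where v: "v = w @ [b]" using assms by (metis rev_exhaust)
  consider "w = []" | "w = [True]" | "w \<noteq> []" "w \<noteq> [True]" by blast
  thus thesis using v that by cases (cases b; auto)+
qed

lemma children_mem:
  assumes "v \<in> Aset \<omega>" "c \<in> set (children (Aset \<omega>) v)" "v \<noteq> []"
  shows "c \<in> Aset \<omega> \<and> c \<noteq> [] \<and> c \<noteq> [True]"
proof (cases "v = [True]")
  case True thus ?thesis using assms mem_TT by (auto simp: children_root)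
next
  case False thus ?thesis using assms binary[OF assms(1), of False]
    by (auto simp: children_nonroot split: if_splits)
qed

lemma corner_child: "c \<in> Aset \<omega> \<Longrightarrow> c \<noteq> [] \<Longrightarrow> c \<noteq> [True] \<Longrightarrow> (c, 0) \<in> corners (Aset \<omega>)"
  by (simp add: corners_def)

lemma csucc_corners:
  assumes k: "\<kappa> \<in> corners (Aset \<omega>)"
  shows "csucc (Aset \<omega>) \<kappa> \<in> corners (Aset \<omega>)"
proof -
  let ?A = "Aset \<omega>"
  obtain v j where kv: "\<kappa> = (v, j)" by (cases \<kappa>)
  have v: "v \<in> ?A" "v \<noteq> []" "j \<le> nch ?A v" "v = [True] \<longrightarrow> 1 \<le> j"
    using k kv by (auto simp: corners_def)
  let ?cs = "children ?A v"
  show ?thesis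
  proof (cases "v = [True]")
    case True
    have "0 < length ?cs" using True by (simp add: children_root)
    hence "?cs ! (j mod length ?cs) \<in> set ?cs" by simp
    hence "(?cs ! (j mod length ?cs), 0) \<in> corners ?A"
      using children_mem[OF v(1) _ v(2)] corner_child by blast
    thus ?thesis using True kv by (simp add: csucc_def Let_def)
  next
    case nr: False
    show ?thesis
    proof (cases "j < length ?cs")
      case True
      hence "?cs ! j \<in> set ?cs" by simp
      hence "(?cs ! j, 0) \<in> corners ?A"
        using children_mem[OF v(1) _ v(2)] corner_child by blast
      thus ?thesis using True nr kv by (simp add: csucc_def Let_def)
    next
      case False
      hence eq: "csucc ?A \<kappa> = (tparent v, cidx v)" using nr kv by (simp add: csucc_def Let_def)
      have "(tparent v, cidx v) \<in> corners ?A"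
        using v(2) proof (cases rule: nonempty_cases)
        case root thus ?thesis using nr by simp
      next
        case F thus ?thesis by (simp add: corners_def tparent_F cidx_F nch_root)
      next
        case (TT b)
        hence "[True, False] \<in> ?A" using v(1) mem_TT by auto
        thus ?thesis using TT by (auto simp: corners_def tparent_TT cidx_TT nch_root)
      next
        case (snoc w b)
        have "w \<in> ?A" using v(1) snoc prefix_closed by blast
        moreover have "w @ [False] \<in> ?A" using v(1) snoc binary[OF \<open>w \<in> ?A\<close>, of b] by (cases b) auto
        ultimately show ?thesis using snoc
          by (auto simp: corners_def tparent_snoc cidx_snoc nch_nonroot)
      qed
      thus ?thesis using eq by simp
    qed
  qed
qed

definition Pv :: "bool list \<Rightarrow> int" where
  "Pv v = (if hd v then 2 else -1) + (\<Sum>b\<leftarrow>tl v. if b then 1 else -1)"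

definition Sdef :: "bool list set \<Rightarrow> bool list \<times> nat \<Rightarrow> int" where
  "Sdef A \<kappa> = (if \<kappa> \<in> corners A then
     (if fst \<kappa> = [True] then (if snd \<kappa> = nch A [True] then 2 * int (snd \<kappa>) - 6 else 2 * int (snd \<kappa>))
      else Pv (fst \<kappa>) + 2 * int (snd \<kappa>)) else 0)"

lemma Pv_snoc: "v \<noteq> [] \<Longrightarrow> Pv (v @ [b]) = Pv v + (if b then 1 else -1)"
  by (cases v) (auto simp: Pv_def)

lemma Pv_simps: "Pv [False] = -1" "Pv [True, False] = 1" "Pv [True, True] = 3"
  by (simp_all add: Pv_def)

lemma delta_root: "(v, j) \<in> corners A \<Longrightarrow> v = [True] \<Longrightarrow>
   delta A (v, j) = (if nch A [True] = 1 then 3 else -1)"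
  by (simp add: delta_def is_bud_corner_def tdegree_def)

lemma delta_nonroot: "(v, j) \<in> corners A \<Longrightarrow> v \<noteq> [True] \<Longrightarrow>
   delta A (v, j) = (if nch A v = 0 then 3 else -1)"
  by (simp add: delta_def is_bud_corner_def tdegree_def)

lemma Sdef_step:
  assumes k: "\<kappa> \<in> corners (Aset \<omega>)"
  shows "Sdef (Aset \<omega>) (csucc (Aset \<omega>) \<kappa>) =
     Sdef (Aset \<omega>) \<kappa> + delta (Aset \<omega>) \<kappa> - (if csucc (Aset \<omega>) \<kappa> = rho (Aset \<omega>) then 6 else 0)"
proof -
  let ?A = "Aset \<omega>"
  obtain v j where kv: "\<kappa> = (v, j)" by (cases \<kappa>)
  have v: "v \<in> ?A" "v \<noteq> []" "j \<le> nch ?A v" "v = [True] \<longrightarrow> 1 \<le> j"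
    using k kv by (auto simp: corners_def)
  have kc: "(v, j) \<in> corners ?A" using k kv by simp
  have sc: "csucc ?A (v, j) \<in> corners ?A" using csucc_corners k kv by simp
  let ?cs = "children ?A v"
  show ?thesis
  proof (cases "v = [True]")
    case True
    show ?thesis
    proof (cases "[True, False] \<in> ?A")
      case TF: True
      hence n3: "nch ?A [True] = 3" by (simp add: nch_root)
      have j: "j = 1 \<or> j = 2 \<or> j = 3" using v True n3 by auto
      have cs: "?cs = [[False], [True, False], [True, True]]" using True TF by (simp add: children_root)
      have "csucc ?A (v, j) = (if j = 1 then ([True, False], 0) else if j = 2 then ([True, True], 0) else ([False], 0))"
        using True cs j by (auto simp: csucc_def Let_def)
      moreover have "Sdef ?A (v, j) = (if j = 3 then 0 else 2 * int j)"
        using kc True n3 by (simp add: Sdef_def)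
      moreover have "delta ?A (v, j) = -1" using delta_root[OF kc True] n3 by simp
      ultimately show ?thesis using sc j True n3 kv
        by (auto simp: Sdef_def rho_def Pv_simps)
    next
      case TF: False
      hence n1: "nch ?A [True] = 1" by (simp add: nch_root)
      have j: "j = 1" using v True n1 by auto
      have cs: "?cs = [[False]]" using True TF by (simp add: children_root)
      have "csucc ?A (v, j) = ([False], 0)"
        using True cs j by (auto simp: csucc_def Let_def)
      moreover have "Sdef ?A (v, j) = -4"
        using kc True n1 j by (simp add: Sdef_def)
      moreover have "delta ?A (v, j) = 3" using delta_root[OF kc True] n1 by simp
      ultimately show ?thesis using sc j True n1 kv
        by (auto simp: Sdef_def rho_def Pv_simps)
    qed
  next
    case nr: False
    show ?thesis
    proof (cases "j < length ?cs")
      case True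
      hence ch: "v @ [False] \<in> ?A" "?cs = [v @ [False], v @ [True]]"
        using nr by (auto simp: children_nonroot split: if_splits)
      hence n2: "nch ?A v = 2" using nr by (simp add: nch_nonroot)
      have j: "j = 0 \<or> j = 1" using True ch by auto
      have c: "csucc ?A (v, j) = (v @ [j = 1], 0)"
        using nr ch j by (auto simp: csucc_def Let_def)
      have ne: "v @ [j = 1] \<noteq> [True]" using v(2) by (cases v) auto
      have s1: "Sdef ?A (v @ [j = 1], 0) = Pv v + (if j = 1 then 1 else -1)"
        using sc ne v(2) unfolding c by (simp add: Sdef_def Pv_snoc)
      have s2: "Sdef ?A (v, j) = Pv v + 2 * int j" using kc nr by (simp add: Sdef_def)
      have d: "delta ?A (v, j) = -1" using delta_nonroot[OF kc nr] n2 by simp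
      have r: "(v @ [j = 1], 0) \<noteq> rho ?A" using ne by (simp add: rho_def nch_root)
      show ?thesis unfolding kv c using s1 s2 d r j by auto
    next
      case False
      hence eq: "csucc ?A (v, j) = (tparent v, cidx v)" using nr by (simp add: csucc_def Let_def)
      have jn: "j = nch ?A v" using False v(3) by (simp add: nch_def)
      have lhs: "Sdef ?A (v, j) + delta ?A (v, j) = Pv v + 3"
      proof (cases "nch ?A v = 0")
        case True thus ?thesis using kc nr jn delta_nonroot[OF kc nr] by (simp add: Sdef_def)
      next
        case False
        hence "nch ?A v = 2" using nch_nonroot[OF nr] by (simp split: if_splits)
        thus ?thesis using kc nr jn delta_nonroot[OF kc nr] by (simp add: Sdef_def)
      qed
      have sc': "(tparent v, cidx v) \<in> corners ?A" using sc eq by simp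
      from v(2) show ?thesis
      proof (cases rule: nonempty_cases)
        case root thus ?thesis using nr by simp
      next
        case F
        have "Sdef ?A ([True], 1) = (if nch ?A [True] = 1 then -4 else 2)"
          using sc' F by (simp add: tparent_F cidx_F Sdef_def)
        moreover have "(([True], 1) = rho ?A) = (nch ?A [True] = 1)" by (auto simp: rho_def)
        moreover have "csucc ?A \<kappa> = ([True], 1)" using kv eq F by (simp add: tparent_F cidx_F)
        moreover have "Sdef ?A \<kappa> + delta ?A \<kappa> = 2" using lhs kv F by (simp add: Pv_simps)
        ultimately show ?thesis by auto
      next
        case (TT b)
        hence "[True, False] \<in> ?A" using v(1) mem_TT by auto
        hence n3: "nch ?A [True] = 3" by (simp add: nch_root)
        have "Sdef ?A ([True], cidx v) = (if b then 0 else 4)"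
          using sc' TT n3 by (simp add: tparent_TT cidx_TT Sdef_def)
        moreover have "(([True], cidx v) = rho ?A) = b" using n3 TT by (simp add: rho_def cidx_TT)
        moreover have "csucc ?A \<kappa> = ([True], cidx v)" using kv eq TT by (simp add: tparent_TT)
        moreover have "Sdef ?A \<kappa> + delta ?A \<kappa> = (if b then 6 else 4)" using lhs kv TT by (simp add: Pv_simps)
        ultimately show ?thesis by auto
      next
        case (snoc w b)
        have tp: "tparent v = w" using snoc by (simp add: tparent_snoc)
        have ci: "cidx v = (if b then 2 else 1)" using snoc by (simp add: cidx_snoc)
        have r: "(tparent v, cidx v) \<noteq> rho ?A" using snoc tp by (simp add: rho_def)
        have "Sdef ?A (tparent v, cidx v) = Pv w + 2 * int (cidx v)"
          using sc' snoc tp by (simp add: Sdef_def)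
        moreover have "Pv v = Pv w + (if b then 1 else -1)" using snoc by (simp add: Pv_snoc)
        moreover have "csucc ?A \<kappa> = (tparent v, cidx v)" using kv eq by simp
        ultimately show ?thesis using lhs r ci kv by (cases b) simp_all
      qed
    qed
  qed
qed

lemma Sdef_rho: "Sdef (Aset \<omega>) (rho (Aset \<omega>)) = (if is_bud_corner (Aset \<omega>) (rho (Aset \<omega>)) then -4 else 0)"
  by (auto simp: Sdef_def rho_def is_bud_corner_def tdegree_def nch_root corners_def)


definition reach :: "bool list set \<Rightarrow> bool list \<times> nat \<Rightarrow> bool list \<times> nat \<Rightarrow> bool" where
  "reach A \<kappa> \<kappa>' \<longleftrightarrow> (\<exists>n. (csucc A ^^ n) \<kappa> = \<kappa>')"

lemma reach_refl[simp]: "reach A \<kappa> \<kappa>"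
  unfolding reach_def by (rule exI[of _ 0]) simp

lemma reach_trans: "reach A a b \<Longrightarrow> reach A b c \<Longrightarrow> reach A a c"
  unfolding reach_def by (metis funpow_add comp_apply)

lemma reach_step: "reach A (csucc A a) c \<Longrightarrow> reach A a c"
  unfolding reach_def by (metis funpow_Suc_right comp_apply)

lemma reach_stepI: "csucc A a = b \<Longrightarrow> reach A b c \<Longrightarrow> reach A a c"
  using reach_step by blast

lemma iter_corners: "\<kappa> \<in> corners (Aset \<omega>) \<Longrightarrow> (csucc (Aset \<omega>) ^^ n) \<kappa> \<in> corners (Aset \<omega>)"
  by (induction n) (auto simp: csucc_corners)

lemma reach_corners: "reach (Aset \<omega>) \<kappa> \<kappa>' \<Longrightarrow> \<kappa> \<in> corners (Aset \<omega>) \<Longrightarrow> \<kappa>' \<in> corners (Aset \<omega>)"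
  unfolding reach_def using iter_corners by blast

lemma csucc_nonroot_down:
  "v \<noteq> [True] \<Longrightarrow> v @ [False] \<in> A \<Longrightarrow> j < 2 \<Longrightarrow> csucc A (v, j) = (v @ [j = 1], 0)"
  by (auto simp: csucc_def Let_def children_nonroot less_2_cases_iff)

lemma csucc_nonroot_up:
  "v \<noteq> [True] \<Longrightarrow> j = nch A v \<Longrightarrow> csucc A (v, j) = (tparent v, cidx v)"
  by (simp add: csucc_def Let_def nch_def)

lemma trav:
  assumes "w \<in> Aset \<omega>" "w \<noteq> []" "w \<noteq> [True]" "\<forall>u. w @ u \<in> Aset \<omega> \<longrightarrow> length u < N"
  shows "reach (Aset \<omega>) (w, 0) (tparent w, cidx w)"
  using assms
proof (induction N arbitrary: w)
  case 0 thus ?case by (metis append_Nil2 not_less0)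
next
  case (Suc N)
  let ?A = "Aset \<omega>"
  show ?case
  proof (cases "w @ [False] \<in> ?A")
    case False
    hence n0: "nch ?A w = 0" using Suc.prems(3) by (simp add: nch_nonroot)
    have "csucc ?A (w, 0) = (tparent w, cidx w)"
      using csucc_nonroot_up[OF Suc.prems(3) n0[symmetric]] by simp
    thus ?thesis by (rule reach_stepI) (rule reach_refl)
  next
    case True
    have T: "w @ [True] \<in> ?A" using binary[OF Suc.prems(1), of False] True by simp
    have ch: "\<forall>u. (w @ [b]) @ u \<in> ?A \<longrightarrow> length u < N" for b
    proof (intro allI impI)
      fix u assume "(w @ [b]) @ u \<in> ?A"
      hence "w @ (b # u) \<in> ?A" by simp
      hence "length (b # u) < Suc N" using Suc.prems(4) by blast
      thus "length u < N" by simp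
    qed
    have ne: "w @ [b] \<noteq> []" "w @ [b] \<noteq> [True]" for b using Suc.prems(2) by (cases w; simp)+
    have r0: "reach ?A (w @ [False], 0) (tparent (w @ [False]), cidx (w @ [False]))"
      by (rule Suc.IH[OF True ne ch])
    hence r0: "reach ?A (w @ [False], 0) (w, 1)"
      using Suc.prems(2,3) by (simp add: tparent_snoc cidx_snoc)
    have r1: "reach ?A (w @ [True], 0) (tparent (w @ [True]), cidx (w @ [True]))"
      by (rule Suc.IH[OF T ne ch])
    hence r1: "reach ?A (w @ [True], 0) (w, 2)"
      using Suc.prems(2,3) by (simp add: tparent_snoc cidx_snoc)
    have n2: "nch ?A w = 2" using True Suc.prems(3) by (simp add: nch_nonroot)
    have r2: "reach ?A (w, 2) (tparent w, cidx w)"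
      using csucc_nonroot_up[OF Suc.prems(3) n2[symmetric]] by (intro reach_stepI[OF _ reach_refl]) simp
    have e1: "csucc ?A (w, 1) = (w @ [True], 0)" using csucc_nonroot_down[OF Suc.prems(3) True, of 1] by simp
    have e0: "csucc ?A (w, 0) = (w @ [False], 0)" using csucc_nonroot_down[OF Suc.prems(3) True, of 0] by simp
    have r11: "reach ?A (w, 1) (tparent w, cidx w)" by (rule reach_stepI[OF e1 reach_trans[OF r1 r2]])
    show ?thesis by (rule reach_stepI[OF e0 reach_trans[OF r0 r11]])
  qed
qed

lemma climb:
  assumes "w \<in> Aset \<omega>" "w \<noteq> []" "w \<noteq> [True]" "\<forall>u. w @ u \<in> Aset \<omega> \<longrightarrow> length u < N"
    and j: "j \<le> nch (Aset \<omega>) w"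
  shows "reach (Aset \<omega>) (w, j) (tparent w, cidx w)"
proof -
  let ?A = "Aset \<omega>"
  show ?thesis
  proof (cases "w @ [False] \<in> ?A")
    case False
    hence "j = 0" using j assms(3) by (simp add: nch_nonroot)
    thus ?thesis using trav[OF assms(1-4)] by simp
  next
    case True
    have T: "w @ [True] \<in> ?A" using binary[OF assms(1), of False] True by simp
    have n2: "nch ?A w = 2" using True assms(3) by (simp add: nch_nonroot)
    have ch: "\<forall>u. (w @ [True]) @ u \<in> ?A \<longrightarrow> length u < N"
    proof (intro allI impI)
      fix u assume "(w @ [True]) @ u \<in> ?A"
      hence "w @ (True # u) \<in> ?A" by simp
      hence "length (True # u) < N" using assms(4) by blast
      thus "length u < N" by simp
    qed
    have ne: "w @ [True] \<noteq> []" "w @ [True] \<noteq> [True]" using assms(2) by (cases w; simp)+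
    have r1: "reach ?A (w @ [True], 0) (tparent (w @ [True]), cidx (w @ [True]))"
      by (rule trav[OF T ne ch])
    hence r1: "reach ?A (w @ [True], 0) (w, 2)"
      using assms(2,3) by (simp add: tparent_snoc cidx_snoc)
    have r2: "reach ?A (w, 2) (tparent w, cidx w)"
      using csucc_nonroot_up[OF assms(3) n2[symmetric]] by (intro reach_stepI[OF _ reach_refl]) simp
    have e1: "csucc ?A (w, 1) = (w @ [True], 0)" using csucc_nonroot_down[OF assms(3) True, of 1] by simp
    have r11: "reach ?A (w, 1) (tparent w, cidx w)" by (rule reach_stepI[OF e1 reach_trans[OF r1 r2]])
    have "j = 0 \<or> j = 1 \<or> j = 2" using j n2 by auto
    moreover have "j = 0 \<Longrightarrow> ?thesis" using trav[OF assms(1-4)] by simp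
    ultimately show ?thesis using r11 r2 by auto
  qed
qed


lemma bnd_gr:
  assumes "finite (GW \<omega> i)" "1 \<le> i" "u0 \<in> GW \<omega> i"
  shows "\<exists>N. \<forall>u. (gr \<omega> i @ u0) @ u \<in> Aset \<omega> \<longrightarrow> length u < N"
proof (intro exI allI impI)
  fix u assume "(gr \<omega> i @ u0) @ u \<in> Aset \<omega>"
  hence "u0 @ u \<in> GW \<omega> i" using mem_gr[OF assms(2)] by simp
  hence "length (u0 @ u) \<in> length ` GW \<omega> i" by (rule imageI)
  hence "length (u0 @ u) \<le> Max (length ` GW \<omega> i)" using assms(1) by (intro Max_ge) auto
  thus "length u < Suc (Max (length ` GW \<omega> i))" by simp
qed

lemma gr_Suc: "gr \<omega> (Suc d) = sp \<omega> d @ [\<not> Xv \<omega> (Suc d)]"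
  by (simp add: gr_def)

lemma sp_ne: "1 \<le> d \<Longrightarrow> sp \<omega> d \<noteq> []"
  using length_sp[of \<omega> d] by (metis le_zero_eq list.size(3) one_neq_zero)

lemma spine_facts:
  assumes d: "1 \<le> d" "sp \<omega> d \<noteq> [True]" and G: "finite (GW \<omega> (Suc d))"
  shows "reach (Aset \<omega>) (sp \<omega> d @ [\<not> Xv \<omega> (Suc d)], 0) (sp \<omega> d, if Xv \<omega> (Suc d) then 1 else 2)"
    and "nch (Aset \<omega>) (sp \<omega> d) = 2"
proof -
  let ?A = "Aset \<omega>" and ?g = "sp \<omega> d @ [\<not> Xv \<omega> (Suc d)]"
  have g: "?g = gr \<omega> (Suc d) @ []" by (simp add: gr_Suc)
  obtain N where N: "\<forall>u. ?g @ u \<in> ?A \<longrightarrow> length u < N"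
    using bnd_gr[OF G _ GW_Nil] g by auto
  have gm: "?g \<in> ?A" by (rule sp_snoc_mem)
  have ne: "?g \<noteq> []" "?g \<noteq> [True]" using sp_ne[OF d(1)] by (cases "sp \<omega> d"; simp)+
  have "reach ?A (?g, 0) (tparent ?g, cidx ?g)" by (rule trav[OF gm ne N])
  moreover have "tparent ?g = sp \<omega> d" using sp_ne[OF d(1)] by (simp add: tparent_snoc)
  moreover have "cidx ?g = (if Xv \<omega> (Suc d) then 1 else 2)" using sp_ne[OF d(1)] d(2) by (simp add: cidx_snoc)
  ultimately show "reach ?A (?g, 0) (sp \<omega> d, if Xv \<omega> (Suc d) then 1 else 2)" by simp
  show "nch ?A (sp \<omega> d) = 2" using d(2) sp_snoc_mem by (simp add: nch_nonroot)
qed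

lemma desc:
  assumes d: "1 \<le> d" "sp \<omega> d \<noteq> [True]" and G: "finite (GW \<omega> (Suc d))"
    and j: "j \<le> (if Xv \<omega> (Suc d) then 1 else 0)"
  shows "reach (Aset \<omega>) (sp \<omega> d, j) (sp \<omega> (Suc d), 0)"
proof -
  let ?A = "Aset \<omega>"
  have fm: "sp \<omega> d @ [False] \<in> ?A" by (rule sp_snoc_mem)
  have down: "csucc ?A (sp \<omega> d, j') = (sp \<omega> d @ [j' = 1], 0)" if "j' < 2" for j'
    using csucc_nonroot_down[OF d(2) fm that] .
  show ?thesis
  proof (cases "Xv \<omega> (Suc d)")
    case False
    hence "j = 0" using j by simp
    thus ?thesis using down[of 0] False by (intro reach_stepI[OF _ reach_refl]) (simp add: sp_Suc)
  next
    case True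
    have e1: "csucc ?A (sp \<omega> d, 1) = (sp \<omega> (Suc d), 0)" using down[of 1] True by (simp add: sp_Suc)
    have r1: "reach ?A (sp \<omega> d, 1) (sp \<omega> (Suc d), 0)" by (rule reach_stepI[OF e1 reach_refl])
    have e0: "csucc ?A (sp \<omega> d, 0) = (sp \<omega> d @ [\<not> Xv \<omega> (Suc d)], 0)" using down[of 0] True by simp
    have r0: "reach ?A (sp \<omega> d, 0) (sp \<omega> (Suc d), 0)"
      using reach_stepI[OF e0 reach_trans[OF spine_facts(1)[OF d G] ]] True r1 by simp
    show ?thesis using j True r0 r1 by (cases j) auto
  qed
qed

lemma asc:
  assumes d: "1 \<le> d" "sp \<omega> d \<noteq> [True]" and G: "finite (GW \<omega> (Suc d))"
    and jc: "(sp \<omega> d, j) \<in> corners (Aset \<omega>)"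
    and j: "j > (if Xv \<omega> (Suc d) then 1 else 0)"
  shows "reach (Aset \<omega>) (sp \<omega> d, j) (tparent (sp \<omega> d), cidx (sp \<omega> d))"
proof -
  let ?A = "Aset \<omega>"
  have n2: "nch ?A (sp \<omega> d) = 2" by (rule spine_facts(2)[OF d G])
  have fm: "sp \<omega> d @ [False] \<in> ?A" by (rule sp_snoc_mem)
  have j2: "j \<le> 2" using jc n2 by (simp add: corners_def)
  have e2: "csucc ?A (sp \<omega> d, 2) = (tparent (sp \<omega> d), cidx (sp \<omega> d))"
    using csucc_nonroot_up[OF d(2) n2[symmetric]] by simp
  have r2: "reach ?A (sp \<omega> d, 2) (tparent (sp \<omega> d), cidx (sp \<omega> d))" by (rule reach_stepI[OF e2 reach_refl])
  show ?thesis
  proof (cases "j = 2")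
    case True thus ?thesis using r2 by simp
  next
    case False
    hence j1: "j = 1" "\<not> Xv \<omega> (Suc d)" using j j2 by (auto split: if_splits)
    have e1: "csucc ?A (sp \<omega> d, 1) = (sp \<omega> d @ [\<not> Xv \<omega> (Suc d)], 0)"
      using csucc_nonroot_down[OF d(2) fm, of 1] j1 by simp
    have "reach ?A (sp \<omega> d @ [\<not> Xv \<omega> (Suc d)], 0) (sp \<omega> d, 2)"
      using spine_facts(1)[OF d G] j1 by simp
    thus ?thesis using reach_stepI[OF e1 reach_trans[OF _ r2]] j1 by simp
  qed
qed


lemma gr_ne: "1 \<le> i \<Longrightarrow> gr \<omega> i @ u \<noteq> []" by (simp add: gr_def)

lemma climb_gr:
  assumes G: "\<forall>i. finite (GW \<omega> i)" and i: "1 \<le> i" and w: "w = gr \<omega> i @ u0" "w \<in> Aset \<omega>" "w \<noteq> [True]"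
    and j: "j \<le> nch (Aset \<omega>) w"
  shows "reach (Aset \<omega>) (w, j) (tparent w, cidx w)"
proof -
  have u0: "u0 \<in> GW \<omega> i" using w mem_gr[OF i] by simp
  obtain N where N: "\<forall>u. (gr \<omega> i @ u0) @ u \<in> Aset \<omega> \<longrightarrow> length u < N"
    using bnd_gr[OF spec[OF G] i u0] by blast
  show ?thesis using climb[OF w(2) _ w(3) _ j] N w(1) gr_ne[OF i] by blast
qed

lemma trav_gr:
  assumes G: "\<forall>i. finite (GW \<omega> i)" and i: "1 \<le> i" and w: "w = gr \<omega> i @ u0" "w \<in> Aset \<omega>" "w \<noteq> [True]"
  shows "reach (Aset \<omega>) (w, 0) (tparent w, cidx w)"
  using climb_gr[OF G i w] by simp

definition d0 :: "omega \<Rightarrow> nat" where "d0 \<omega> = (if Xv \<omega> 1 then 2 else 1)"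

lemma csucc_root: "csucc A ([True], j) = (children A [True] ! (j mod nch A [True]), 0)"
  by (simp add: csucc_def Let_def nch_def)

lemma sp_1': "sp \<omega> (Suc 0) = [Xv \<omega> (Suc 0)]" by (simp add: sp_def)

lemma sp_2: "sp \<omega> 2 = [Xv \<omega> 1, Xv \<omega> 2]"
proof -
  have "sp \<omega> 2 = sp \<omega> (Suc 1)" by (simp add: numeral_2_eq_2)
  also have "\<dots> = [Xv \<omega> 1, Xv \<omega> 2]" by (simp only: sp_Suc sp_1) (simp add: numeral_2_eq_2)
  finally show ?thesis .
qed

lemma gr_1: "gr \<omega> 1 = [\<not> Xv \<omega> 1]" by (simp add: gr_def)
lemma gr_1': "gr \<omega> (Suc 0) = [\<not> Xv \<omega> (Suc 0)]" by (simp add: gr_def)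
lemma gr_2: "gr \<omega> 2 = [Xv \<omega> 1, \<not> Xv \<omega> 2]" by (simp add: gr_def sp_def)

lemma R_root:
  assumes G: "\<forall>i. finite (GW \<omega> i)" and jc: "([True], j) \<in> corners (Aset \<omega>)"
  shows "reach (Aset \<omega>) ([True], j) (sp \<omega> (d0 \<omega>), 0)"
proof -
  let ?A = "Aset \<omega>"
  have jr: "1 \<le> j" "j \<le> nch ?A [True]" using jc by (auto simp: corners_def)
  show ?thesis
  proof (cases "Xv \<omega> 1")
    case x1: True
    have TF: "[True, False] \<in> ?A" using sp_snoc_mem[of \<omega> 1 False] x1 by (simp add: sp_1')
    have TT: "[True, True] \<in> ?A" using TF mem_TT by blast
    have n3: "nch ?A [True] = 3" using TF by (simp add: nch_root)
    have ch: "children ?A [True] = [[False], [True, False], [True, True]]" using TF by (simp add: children_root)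
    have c1: "csucc ?A ([True], 1) = ([True, False], 0)" using ch n3 by (simp add: csucc_root)
    have c2: "csucc ?A ([True], 2) = ([True, True], 0)" using ch n3 by (simp add: csucc_root)
    have c3: "csucc ?A ([True], 3) = ([False], 0)" using ch n3 by (simp add: csucc_root)
    have s2: "sp \<omega> (d0 \<omega>) = [True, Xv \<omega> 2]" using x1 by (simp add: d0_def sp_2)
    have tF: "reach ?A ([False], 0) ([True], 1)"
      using trav_gr[OF G _ _ mem_single[of False \<omega>], of 1 "[]"] x1 by (simp add: gr_1' tparent_F cidx_F)
    have tg: "reach ?A ([True, \<not> Xv \<omega> 2], 0) ([True], if Xv \<omega> 2 then 2 else 3)"
    proof -
      have m: "[True, \<not> Xv \<omega> 2] \<in> ?A" using TF TT by (cases "Xv \<omega> 2") auto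
      show ?thesis using trav_gr[OF G _ _ m, of 2 "[]"] x1
        by (cases "Xv \<omega> 2") (simp_all add: gr_2 tparent_TT cidx_TT)
    qed
    have r1: "reach ?A ([True], 1) (sp \<omega> (d0 \<omega>), 0)"
    proof (cases "Xv \<omega> 2")
      case False thus ?thesis using reach_stepI[OF c1 reach_refl] s2 by simp
    next
      case True
      have q: "reach ?A ([True], 2) (sp \<omega> (d0 \<omega>), 0)" using reach_stepI[OF c2 reach_refl] s2 True by simp
      thus ?thesis using reach_stepI[OF c1 reach_trans[OF _ q]] tg True by simp
    qed
    have r3: "reach ?A ([True], 3) (sp \<omega> (d0 \<omega>), 0)"
      by (rule reach_stepI[OF c3 reach_trans[OF tF r1]])
    have r2: "reach ?A ([True], 2) (sp \<omega> (d0 \<omega>), 0)"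
    proof (cases "Xv \<omega> 2")
      case True thus ?thesis using reach_stepI[OF c2 reach_refl] s2 by simp
    next
      case False
      thus ?thesis using reach_stepI[OF c2 reach_trans[OF _ r3]] tg by simp
    qed
    have "j = 1 \<or> j = 2 \<or> j = 3" using jr n3 by auto
    thus ?thesis using r1 r2 r3 by auto
  next
    case x1: False
    have s1: "sp \<omega> (d0 \<omega>) = [False]" using x1 by (simp add: d0_def sp_1')
    show ?thesis
    proof (cases "[True, False] \<in> ?A")
      case False
      hence n1: "nch ?A [True] = 1" by (simp add: nch_root)
      hence "j = 1" using jr by simp
      moreover have c: "csucc ?A ([True], 1) = ([False], 0)" using False n1 by (simp add: csucc_root children_root)
      ultimately show ?thesis using reach_stepI[OF c reach_refl] s1 by simp
    next
      case TF: True
      have TT: "[True, True] \<in> ?A" using TF mem_TT by blast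
      have n3: "nch ?A [True] = 3" using TF by (simp add: nch_root)
      have ch: "children ?A [True] = [[False], [True, False], [True, True]]" using TF by (simp add: children_root)
      have c1: "csucc ?A ([True], 1) = ([True, False], 0)" using ch n3 by (simp add: csucc_root)
      have c2: "csucc ?A ([True], 2) = ([True, True], 0)" using ch n3 by (simp add: csucc_root)
      have c3: "csucc ?A ([True], 3) = ([False], 0)" using ch n3 by (simp add: csucc_root)
      have g1: "[True, b] = gr \<omega> 1 @ [b]" for b using x1 by (simp add: gr_1')
      have tb: "reach ?A ([True, b], 0) ([True], if b then 3 else 2)" for b
      proof -
        have m: "[True, b] \<in> ?A" using TF TT by (cases b) auto
        show ?thesis using trav_gr[OF G _ g1 m] by (simp add: tparent_TT cidx_TT)
      qed
      have r3: "reach ?A ([True], 3) (sp \<omega> (d0 \<omega>), 0)" using reach_stepI[OF c3 reach_refl] s1 by simp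
      have r2: "reach ?A ([True], 2) (sp \<omega> (d0 \<omega>), 0)"
        using reach_stepI[OF c2 reach_trans[OF _ r3]] tb[of True] by simp
      have r1: "reach ?A ([True], 1) (sp \<omega> (d0 \<omega>), 0)"
        using reach_stepI[OF c1 reach_trans[OF _ r2]] tb[of False] by simp
      have "j = 1 \<or> j = 2 \<or> j = 3" using jr n3 by auto
      thus ?thesis using r1 r2 r3 by auto
    qed
  qed
qed


lemma d0_le: "1 \<le> d0 \<omega>" "d0 \<omega> \<le> 2" by (auto simp: d0_def)

lemma sp_ne_True: "d0 \<omega> \<le> d \<Longrightarrow> sp \<omega> d \<noteq> [True]"
proof
  assume d: "d0 \<omega> \<le> d" and e: "sp \<omega> d = [True]"
  have "length (sp \<omega> d) = 1" using e by simp
  hence "d = 1" by simp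
  thus False using d e by (auto simp: d0_def sp_1' split: if_splits)
qed

lemma R_spine:
  assumes G: "\<forall>i. finite (GW \<omega> i)"
  shows "1 \<le> d \<Longrightarrow> sp \<omega> d \<noteq> [True] \<Longrightarrow> (sp \<omega> d, j) \<in> corners (Aset \<omega>) \<Longrightarrow>
    \<exists>e\<ge>d0 \<omega>. reach (Aset \<omega>) (sp \<omega> d, j) (sp \<omega> e, 0)"
proof (induction d arbitrary: j)
  case 0 thus ?case by simp
next
  case (Suc d)
  let ?A = "Aset \<omega>"
  show ?case
  proof (cases "j \<le> (if Xv \<omega> (Suc (Suc d)) then 1 else 0)")
    case True
    have "reach ?A (sp \<omega> (Suc d), j) (sp \<omega> (Suc (Suc d)), 0)"
      by (rule desc[OF Suc.prems(1,2) spec[OF G] True])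
    moreover have "d0 \<omega> \<le> Suc (Suc d)" using d0_le(2)[of \<omega>] by linarith
    ultimately show ?thesis by blast
  next
    case False
    hence r: "reach ?A (sp \<omega> (Suc d), j) (tparent (sp \<omega> (Suc d)), cidx (sp \<omega> (Suc d)))"
      by (intro asc[OF Suc.prems(1,2) spec[OF G] Suc.prems(3)]) simp
    have pc: "(tparent (sp \<omega> (Suc d)), cidx (sp \<omega> (Suc d))) \<in> corners ?A"
      using reach_corners[OF r Suc.prems(3)] .
    show ?thesis
    proof (cases "tparent (sp \<omega> (Suc d)) = [True]")
      case True
      thus ?thesis using R_root[OF G, of "cidx (sp \<omega> (Suc d))"] pc reach_trans[OF r] by auto
    next
      case nT: False
      show ?thesis
      proof (cases d)
        case 0
        hence "sp \<omega> (Suc d) = [False]" using Suc.prems(2) by (cases "Xv \<omega> 1") (auto simp: sp_1')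
        hence "tparent (sp \<omega> (Suc d)) = [True]" by (simp add: tparent_F)
        thus ?thesis using nT by simp
      next
        case (Suc d')
        hence "sp \<omega> d \<noteq> []" using sp_ne[of d \<omega>] by simp
        hence tp: "tparent (sp \<omega> (Suc d)) = sp \<omega> d"
          unfolding sp_Suc[of \<omega> d] by (rule tparent_snoc)
        have "\<exists>e\<ge>d0 \<omega>. reach ?A (sp \<omega> d, cidx (sp \<omega> (Suc d))) (sp \<omega> e, 0)"
          using Suc.IH[of "cidx (sp \<omega> (Suc d))"] Suc nT tp pc by simp
        thus ?thesis using reach_trans[OF r] tp by auto
      qed
    qed
  qed
qed

lemma R_gw:
  assumes G: "\<forall>i. finite (GW \<omega> i)" and i: "1 \<le> i"
  shows "u \<in> GW \<omega> i \<Longrightarrow> gr \<omega> i @ u \<noteq> [True] \<Longrightarrow> (gr \<omega> i @ u, j) \<in> corners (Aset \<omega>) \<Longrightarrow>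
    \<exists>e\<ge>d0 \<omega>. reach (Aset \<omega>) (gr \<omega> i @ u, j) (sp \<omega> e, 0)"
proof (induction u arbitrary: j rule: rev_induct)
  case Nil
  let ?A = "Aset \<omega>"
  have wA: "gr \<omega> i \<in> ?A" using Nil.prems(3) by (simp add: corners_def)
  have jn: "j \<le> nch ?A (gr \<omega> i)" using Nil.prems(3) by (simp add: corners_def)
  have r: "reach ?A (gr \<omega> i, j) (tparent (gr \<omega> i), cidx (gr \<omega> i))"
    using climb_gr[OF G i _ wA _ jn, of "[]"] Nil.prems(2) by simp
  have pc: "(tparent (gr \<omega> i), cidx (gr \<omega> i)) \<in> corners ?A"
    using reach_corners[OF r] Nil.prems(3) by simp
  show ?case
  proof (cases "tparent (gr \<omega> i) = [True]")
    case True
    thus ?thesis using R_root[OF G, of "cidx (gr \<omega> i)"] pc reach_trans[OF r] by auto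
  next
    case nT: False
    show ?thesis
    proof (cases "i = 1")
      case True
      hence "gr \<omega> i = [False]" using Nil.prems(2) by (cases "Xv \<omega> 1") (auto simp: gr_1')
      thus ?thesis using nT by (simp add: tparent_F)
    next
      case False
      then obtain d where d: "i = Suc d" "1 \<le> d" using i by (cases i) auto
      have tp: "tparent (gr \<omega> i) = sp \<omega> d" using d sp_ne[OF d(2)] by (simp add: gr_Suc tparent_snoc)
      have "\<exists>e\<ge>d0 \<omega>. reach ?A (sp \<omega> d, cidx (gr \<omega> i)) (sp \<omega> e, 0)"
        using R_spine[OF G d(2), of "cidx (gr \<omega> i)"] nT tp pc by simp
      thus ?thesis using reach_trans[OF r] tp by auto
    qed
  qed
next
  case (snoc b u)
  let ?A = "Aset \<omega>"
  let ?w = "gr \<omega> i @ u @ [b]"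
  have wA: "?w \<in> ?A" using snoc.prems(3) by (simp add: corners_def)
  have jn: "j \<le> nch ?A ?w" using snoc.prems(3) by (simp add: corners_def)
  have r: "reach ?A (?w, j) (tparent ?w, cidx ?w)"
    using climb_gr[OF G i _ wA _ jn, of "u @ [b]"] snoc.prems(2) by simp
  have pc: "(tparent ?w, cidx ?w) \<in> corners ?A"
    using reach_corners[OF r] snoc.prems(3) by simp
  have tp: "tparent ?w = gr \<omega> i @ u" using gr_ne[OF i, of \<omega> u]
    by (metis append_assoc tparent_snoc)
  have uG: "u \<in> GW \<omega> i" using snoc.prems(1) GW_snoc by blast
  show ?case
  proof (cases "gr \<omega> i @ u = [True]")
    case True
    thus ?thesis using R_root[OF G, of "cidx ?w"] pc tp reach_trans[OF r] by auto
  next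
    case False
    thus ?thesis using snoc.IH[OF uG False, of "cidx ?w"] pc tp reach_trans[OF r] by auto
  qed
qed

lemma R_all:
  assumes G: "\<forall>i. finite (GW \<omega> i)" and k: "\<kappa> \<in> corners (Aset \<omega>)"
  shows "\<exists>e\<ge>d0 \<omega>. reach (Aset \<omega>) \<kappa> (sp \<omega> e, 0)"
proof -
  obtain v j where kv: "\<kappa> = (v, j)" by (cases \<kappa>)
  have v: "v \<in> Aset \<omega>" "v \<noteq> []" using k kv by (auto simp: corners_def)
  show ?thesis
  proof (cases "v = [True]")
    case True thus ?thesis using R_root[OF G, of j] k kv by auto
  next
    case False
    from v(1) show ?thesis
    proof (cases rule: mem_cases)
      case (1 d)
      hence "1 \<le> d" using v(2) by (cases d) auto
      thus ?thesis using R_spine[OF G, of d j] 1 False k kv by auto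
    next
      case (2 i u)
      thus ?thesis using R_gw[OF G 2(1) 2(2), of j] False k kv by auto
    qed
  qed
qed

lemma chain:
  assumes G: "\<forall>i. finite (GW \<omega> i)" and d: "d0 \<omega> \<le> d"
  shows "d \<le> e \<Longrightarrow> reach (Aset \<omega>) (sp \<omega> d, 0) (sp \<omega> e, 0)"
proof (induction e)
  case 0 thus ?case by simp
next
  case (Suc e)
  show ?case
  proof (cases "d = Suc e")
    case True thus ?thesis by simp
  next
    case False
    hence de: "d \<le> e" using Suc.prems by simp
    have "1 \<le> e" "d0 \<omega> \<le> e" using de d d0_le[of \<omega>] by auto
    hence "reach (Aset \<omega>) (sp \<omega> e, 0) (sp \<omega> (Suc e), 0)"
      using desc[OF _ sp_ne_True spec[OF G], of e 0] by simp
    thus ?thesis using reach_trans Suc.IH[OF de] by blast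
  qed
qed


lemma rho_corners: "rho (Aset \<omega>) \<in> corners (Aset \<omega>)"
  by (simp add: rho_def corners_def nch_root)

definition Qlab :: "bool list set \<Rightarrow> (bool list \<times> nat \<Rightarrow> int) \<Rightarrow> bool" where
  "Qlab A S \<longleftrightarrow> (\<forall>\<kappa>. \<kappa> \<notin> corners A \<longrightarrow> S \<kappa> = 0)
      \<and> S (rho A) = (if is_bud_corner A (rho A) then -4 else 0)
      \<and> (\<forall>\<kappa>\<in>corners A. S (csucc A \<kappa>) =
            S \<kappa> + delta A \<kappa> - (if csucc A \<kappa> = rho A then 6 else 0))"

lemma Qlab_Sdef: "Qlab (Aset \<omega>) (Sdef (Aset \<omega>))"
  unfolding Qlab_def using Sdef_step Sdef_rho by (auto simp: Sdef_def)

lemma diff_invariant: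
  assumes "Qlab (Aset \<omega>) S1" "Qlab (Aset \<omega>) S2" "\<kappa> \<in> corners (Aset \<omega>)"
  shows "S1 ((csucc (Aset \<omega>) ^^ n) \<kappa>) - S2 ((csucc (Aset \<omega>) ^^ n) \<kappa>) = S1 \<kappa> - S2 \<kappa>"
proof (induction n)
  case 0 thus ?case by simp
next
  case (Suc n)
  have c: "(csucc (Aset \<omega>) ^^ n) \<kappa> \<in> corners (Aset \<omega>)" using iter_corners[OF assms(3)] .
  show ?case using Suc assms(1,2) c unfolding Qlab_def by simp
qed

lemma diff_reach:
  assumes "Qlab (Aset \<omega>) S1" "Qlab (Aset \<omega>) S2" "\<kappa> \<in> corners (Aset \<omega>)" "reach (Aset \<omega>) \<kappa> \<kappa>'"
  shows "S1 \<kappa>' - S2 \<kappa>' = S1 \<kappa> - S2 \<kappa>"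
  using assms(4) diff_invariant[OF assms(1-3)] unfolding reach_def by auto

lemma Qlab_unique:
  assumes G: "\<forall>i. finite (GW \<omega> i)" and Q: "Qlab (Aset \<omega>) S1" "Qlab (Aset \<omega>) S2"
  shows "S1 = S2"
proof
  fix \<kappa>
  let ?A = "Aset \<omega>"
  show "S1 \<kappa> = S2 \<kappa>"
  proof (cases "\<kappa> \<in> corners ?A")
    case False
    have "S1 \<kappa> = 0" "S2 \<kappa> = 0" using Q False unfolding Qlab_def by blast+
    thus ?thesis by simp
  next
    case True
    obtain e where e: "e \<ge> d0 \<omega>" "reach ?A \<kappa> (sp \<omega> e, 0)" using R_all[OF G True] by blast
    obtain e' where e': "e' \<ge> d0 \<omega>" "reach ?A (rho ?A) (sp \<omega> e', 0)" using R_all[OF G rho_corners] by blast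
    let ?m = "max e e'"
    have r1: "reach ?A \<kappa> (sp \<omega> ?m, 0)" using reach_trans[OF e(2) chain[OF G e(1)]] by simp
    have r2: "reach ?A (rho ?A) (sp \<omega> ?m, 0)" using reach_trans[OF e'(2) chain[OF G e'(1)]] by simp
    have "S1 (rho ?A) - S2 (rho ?A) = 0" using Q unfolding Qlab_def by simp
    thus ?thesis using diff_reach[OF Q True r1] diff_reach[OF Q rho_corners r2] by simp
  qed
qed

lemma label_eq:
  assumes G: "\<forall>i. finite (GW \<omega> i)"
  shows "label (Aset \<omega>) = Sdef (Aset \<omega>)"
proof -
  have "label (Aset \<omega>) = (THE S. Qlab (Aset \<omega>) S)" unfolding label_def Qlab_def ..
  also have "\<dots> = Sdef (Aset \<omega>)"
    using Qlab_Sdef Qlab_unique[OF G] by (intro the_equality) auto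
  finally show ?thesis .
qed

definition W :: "omega \<Rightarrow> nat \<Rightarrow> int" where
  "W \<omega> n = (\<Sum>i<n. if Xv \<omega> (i + 2) then 1 else -1)"

lemma Pv_sp: "Pv (sp \<omega> (Suc n)) = (if Xv \<omega> 1 then 2 else -1) + W \<omega> n"
proof (induction n)
  case 0 thus ?case by (simp add: sp_1' Pv_def W_def)
next
  case (Suc n)
  have "Pv (sp \<omega> (Suc (Suc n))) = Pv (sp \<omega> (Suc n)) + (if Xv \<omega> (Suc (Suc n)) then 1 else -1)"
    unfolding sp_Suc[of \<omega> "Suc n"] by (rule Pv_snoc) (simp add: sp_ne)
  thus ?case using Suc by (simp add: W_def)
qed

lemma W_lower: "- int n \<le> W \<omega> n"
  by (induction n) (auto simp: W_def)

lemma label_sp: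
  assumes G: "\<forall>i. finite (GW \<omega> i)" and d: "d0 \<omega> \<le> d"
  shows "label (Aset \<omega>) (sp \<omega> d, 0) = Pv (sp \<omega> d)"
proof -
  have "(sp \<omega> d, 0) \<in> corners (Aset \<omega>)"
    using corner_child[OF mem_sp sp_ne sp_ne_True[OF d]] d d0_le[of \<omega>] by simp
  thus ?thesis using sp_ne_True[OF d] by (simp add: label_eq[OF G] Sdef_def)
qed

lemma acyclic:
  assumes G: "\<forall>i. finite (GW \<omega> i)" and k: "\<kappa> \<in> corners (Aset \<omega>)"
    and eq: "(csucc (Aset \<omega>) ^^ m) \<kappa> = (csucc (Aset \<omega>) ^^ n) \<kappa>"
  shows "m = n"
proof (rule ccontr)
  let ?A = "Aset \<omega>" and ?f = "\<lambda>j. (csucc (Aset \<omega>) ^^ j) \<kappa>"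
  assume "m \<noteq> n"
  then obtain a b where ab: "a < b" "?f a = ?f b"
    using eq by (metis linorder_neqE_nat)
  have all: "\<forall>k. ?f k \<in> ?f ` {..<b}"
  proof
    fix k show "?f k \<in> ?f ` {..<b}"
    proof (induction k rule: less_induct)
      case (less k)
      show ?case
      proof (cases "k < b")
        case True thus ?thesis by simp
      next
        case False
        have "?f k = (csucc ?A ^^ (k - b)) (?f b)" by (metis False funpow_add comp_apply le_add_diff_inverse2 not_less)
        also have "\<dots> = (csucc ?A ^^ (k - b)) (?f a)" using ab by simp
        also have "\<dots> = ?f (k - b + a)" by (simp add: funpow_add)
        finally show ?thesis using less.IH[of "k - b + a"] ab False by simp
      qed
    qed
  qed
  obtain e where e: "e \<ge> d0 \<omega>" "reach ?A \<kappa> (sp \<omega> e, 0)" using R_all[OF G k] by blast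
  have "(\<lambda>e'. (sp \<omega> e', 0::nat)) ` {e..} \<subseteq> ?f ` {..<b}"
  proof
    fix y assume "y \<in> (\<lambda>e'. (sp \<omega> e', 0::nat)) ` {e..}"
    then obtain e' where e': "e \<le> e'" "y = (sp \<omega> e', 0)" by auto
    have "reach ?A \<kappa> y" using reach_trans[OF e(2) chain[OF G e(1) e'(1)]] e'(2) by simp
    then obtain k where "?f k = y" unfolding reach_def by blast
    thus "y \<in> ?f ` {..<b}" using all by metis
  qed
  moreover have "inj_on (\<lambda>e'. (sp \<omega> e', 0::nat)) {e..}"
    by (rule inj_onI) (metis Pair_inject length_sp)
  ultimately have "finite {e..}"
    by (meson finite_imageD finite_imageI finite_lessThan finite_subset)
  thus False using infinite_Ici by blast
qed


lemma good_target:
  assumes G: "\<forall>i. finite (GW \<omega> i)" and H: "\<forall>M::nat. \<exists>n. W \<omega> n \<le> - int M"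
    and k: "\<kappa> \<in> corners (Aset \<omega>)"
  shows "\<exists>n>0. label (Aset \<omega>) ((csucc (Aset \<omega>) ^^ n) \<kappa>) \<le> label (Aset \<omega>) \<kappa> - 6"
proof -
  let ?A = "Aset \<omega>" and ?L = "label (Aset \<omega>) \<kappa>"
  obtain e where e: "e \<ge> d0 \<omega>" "reach ?A \<kappa> (sp \<omega> e, 0)" using R_all[OF G k] by blast
  define M where "M = nat (\<bar>?L\<bar> + 8) + e"
  obtain n where n: "W \<omega> n \<le> - int M" using H by blast
  have "M \<le> n" using n W_lower[of n \<omega>] by simp
  hence dn: "e \<le> Suc n" unfolding M_def by simp
  have d0: "d0 \<omega> \<le> Suc n" using dn e(1) by simp
  have lab: "label ?A (sp \<omega> (Suc n), 0) = (if Xv \<omega> 1 then 2 else -1) + W \<omega> n"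
    using label_sp[OF G d0] Pv_sp by simp
  have lt: "label ?A (sp \<omega> (Suc n), 0) \<le> ?L - 6"
    using lab n unfolding M_def by (auto split: if_splits)
  have "reach ?A \<kappa> (sp \<omega> (Suc n), 0)" using reach_trans[OF e(2) chain[OF G e(1) dn]] .
  then obtain m where m: "(csucc ?A ^^ m) \<kappa> = (sp \<omega> (Suc n), 0)" unfolding reach_def by blast
  have "m \<noteq> 0" using m lt by (cases m) auto
  thus ?thesis using m lt by auto
qed

lemma det_main:
  assumes G: "\<forall>i. finite (GW \<omega> i)" and H: "\<forall>M::nat. \<exists>n. W \<omega> n \<le> - int M"
  shows "(\<forall>\<kappa>\<in>corners (Aset \<omega>). \<exists>\<kappa>'\<in>corners (Aset \<omega>).
        cprec (Aset \<omega>) \<kappa> \<kappa>' \<and>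
        label (Aset \<omega>) \<kappa>' \<le> label (Aset \<omega>) \<kappa> -
          (if cprec (Aset \<omega>) \<kappa> (rho (Aset \<omega>)) \<and> cpreceq (Aset \<omega>) (rho (Aset \<omega>)) \<kappa>'
           then 6 else 0))
   \<and> (\<forall>\<kappa>\<in>corners (Aset \<omega>). is_bud_corner (Aset \<omega>) \<kappa> \<longrightarrow> attach_corner (Aset \<omega>) \<kappa> \<noteq> None)"
proof -
  let ?A = "Aset \<omega>"
  let ?f = "\<lambda>\<kappa> n. (csucc ?A ^^ n) \<kappa>"
  have ex: "\<exists>n>0. attach_cond ?A \<kappa> (?f \<kappa> n)" if k: "\<kappa> \<in> corners ?A" for \<kappa>
  proof -
    obtain n where n: "n > 0" "label ?A (?f \<kappa> n) \<le> label ?A \<kappa> - 6" using good_target[OF G H k] by blast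
    have "?f \<kappa> n \<in> corners ?A" using iter_corners[OF k] .
    hence "cprec ?A \<kappa> (?f \<kappa> n)" using n k unfolding cprec_def by blast
    thus ?thesis using n unfolding attach_cond_def by (intro exI[of _ n]) auto
  qed
  have P1: "\<forall>\<kappa>\<in>corners ?A. \<exists>\<kappa>'\<in>corners ?A. cprec ?A \<kappa> \<kappa>' \<and>
        label ?A \<kappa>' \<le> label ?A \<kappa> - (if cprec ?A \<kappa> (rho ?A) \<and> cpreceq ?A (rho ?A) \<kappa>' then 6 else 0)"
  proof
    fix \<kappa> assume k: "\<kappa> \<in> corners ?A"
    obtain n where n: "n > 0" "attach_cond ?A \<kappa> (?f \<kappa> n)" using ex[OF k] by blast
    thus "\<exists>\<kappa>'\<in>corners ?A. cprec ?A \<kappa> \<kappa>' \<and>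
        label ?A \<kappa>' \<le> label ?A \<kappa> - (if cprec ?A \<kappa> (rho ?A) \<and> cpreceq ?A (rho ?A) \<kappa>' then 6 else 0)"
      using iter_corners[OF k] unfolding attach_cond_def by blast
  qed
  have P2: "attach_corner ?A \<kappa> \<noteq> None" if k: "\<kappa> \<in> corners ?A" for \<kappa>
  proof -
    define P where "P n \<longleftrightarrow> 0 < n \<and> attach_cond ?A \<kappa> (?f \<kappa> n)" for n
    have "\<exists>n. P n" using ex[OF k] unfolding P_def by blast
    define N where "N = (LEAST n. P n)"
    have PN: "P N" unfolding N_def using \<open>\<exists>n. P n\<close> by (metis LeastI)
    have "is_first_attach ?A \<kappa> (?f \<kappa> N)"
      unfolding is_first_attach_def
    proof (intro conjI allI impI)
      show "attach_cond ?A \<kappa> (?f \<kappa> N)" using PN unfolding P_def by simp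
    next
      fix \<mu> assume mu: "cprec ?A \<kappa> \<mu> \<and> cprec ?A \<mu> (?f \<kappa> N)"
      then obtain a where a: "a > 0" "?f \<kappa> a = \<mu>" unfolding cprec_def by blast
      obtain b where b: "b > 0" "(csucc ?A ^^ b) \<mu> = ?f \<kappa> N" using mu unfolding cprec_def by blast
      have "?f \<kappa> (b + a) = ?f \<kappa> N" using a b by (simp add: funpow_add)
      hence "b + a = N" using acyclic[OF G k] by blast
      hence "a < N" using b by simp
      hence "\<not> P a" unfolding N_def using not_less_Least by blast
      thus "\<not> attach_cond ?A \<kappa> \<mu>" using a unfolding P_def by simp
    qed
    hence "\<exists>\<kappa>'. is_first_attach ?A \<kappa> \<kappa>'" by blast
    thus ?thesis unfolding attach_corner_def by simp
  qed
  show ?thesis using P1 P2 by blast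
qed


abbreviation Bm :: "bool measure" where "Bm \<equiv> measure_pmf (bernoulli_pmf (1/2))"
abbreviation Sq :: "(nat \<Rightarrow> bool) measure" where "Sq \<equiv> PiM UNIV (\<lambda>_. Bm)"

lemma sets_Bm[simp]: "sets Bm = UNIV" by simp
lemma space_Bm[simp]: "space Bm = UNIV" by simp

lemma meas_coord[measurable]: "(\<lambda>y. y i) \<in> measurable (PiM UNIV (\<lambda>_. Bm)) (count_space UNIV)"
proof -
  have "(\<lambda>y. y i) \<in> measurable (PiM UNIV (\<lambda>_. Bm)) Bm" by (rule measurable_component_singleton) simp
  moreover have "measurable (PiM UNIV (\<lambda>_. Bm)) Bm = measurable (PiM UNIV (\<lambda>_. Bm)) (count_space UNIV)"
    by (rule measurable_cong_sets) simp_all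
  ultimately show ?thesis by simp
qed

definition Wy :: "(nat \<Rightarrow> bool) \<Rightarrow> nat \<Rightarrow> int" where
  "Wy y n = (\<Sum>i<n. if y i then 1 else -1)"

lemma meas_Wy[measurable]: "(\<lambda>y. Wy y n) \<in> measurable Sq (count_space UNIV)"
proof (induction n)
  case 0 thus ?case by (simp add: Wy_def)
next
  case (Suc n)
  have eq: "(\<lambda>y. Wy y (Suc n)) = (\<lambda>y. (\<lambda>w y. w + (if y n then 1 else -1)) (Wy y n) y)"
    by (simp add: Wy_def)
  show ?case unfolding eq
    by (rule measurable_compose_countable[OF _ Suc]) measurable
qed

lemma space_Sq[simp]: "space Sq = UNIV" by (simp add: space_PiM)

lemma prob_Bm: "prob_space Bm" by (rule prob_space_measure_pmf)
lemma prob_Sq: "prob_space Sq" by (rule prob_space_PiM) (rule prob_Bm)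

lemma PiM_iter_Sq: "distr (Bm \<Otimes>\<^sub>M Sq) Sq (\<lambda>(s, \<omega>). case_nat s \<omega>) = Sq"
proof -
  interpret sequence_space Bm by unfold_locales
  show ?thesis by (rule PiM_iter)
qed

lemma meas_Wy_pred[measurable]: "Measurable.pred Sq (\<lambda>y. P (Wy y n))"
  using measurable_compose[OF meas_Wy, of P "count_space UNIV" n] by simp

definition Ev :: "int \<Rightarrow> (nat \<Rightarrow> bool) set" where
  "Ev x = {y \<in> space Sq. \<forall>n. 0 < x + Wy y n}"

lemma Ev_sets[measurable]: "Ev x \<in> sets Sq"
  unfolding Ev_def by measurable

lemma Wy_0[simp]: "Wy y 0 = 0" by (simp add: Wy_def)
lemma Wy_case_nat: "Wy (case_nat b y) (Suc n) = (if b then 1 else -1) + Wy y n"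
  unfolding Wy_def sum.lessThan_Suc_shift by simp

lemma Ev_case_nat: "0 < x \<Longrightarrow> case_nat b y \<in> Ev x \<longleftrightarrow> y \<in> Ev (x + (if b then 1 else -1))"
proof -
  assume x: "0 < x"
  have "(\<forall>n. 0 < x + Wy (case_nat b y) n) \<longleftrightarrow> (\<forall>n. 0 < x + Wy (case_nat b y) (Suc n))"
    using x by (metis Wy_0 add.right_neutral not0_implies_Suc)
  thus ?thesis by (simp add: Ev_def Wy_case_nat add.assoc)
qed

lemma Ev_empty: "x \<le> 0 \<Longrightarrow> Ev x = {}"
  by (auto simp: Ev_def intro!: exI[of _ 0])

lemma Ev_rec:
  assumes x: "0 < x"
  shows "emeasure Sq (Ev x) = emeasure Sq (Ev (x + 1)) * ennreal (1/2) + emeasure Sq (Ev (x - 1)) * ennreal (1/2)"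
proof -
  interpret Sp: prob_space Sq by (rule prob_Sq)
  let ?g = "\<lambda>(s, \<omega>). case_nat s \<omega> :: nat \<Rightarrow> bool"
  have gm: "?g \<in> measurable (Bm \<Otimes>\<^sub>M Sq) Sq"
    by measurable
  have "emeasure Sq (Ev x) = emeasure (distr (Bm \<Otimes>\<^sub>M Sq) Sq ?g) (Ev x)"
    by (simp add: PiM_iter_Sq)
  also have "\<dots> = emeasure (Bm \<Otimes>\<^sub>M Sq) (?g -` Ev x \<inter> space (Bm \<Otimes>\<^sub>M Sq))"
    by (rule emeasure_distr[OF gm Ev_sets])
  also have "\<dots> = (\<integral>\<^sup>+b. emeasure Sq (Pair b -` (?g -` Ev x \<inter> space (Bm \<Otimes>\<^sub>M Sq))) \<partial>Bm)"
    by (rule Sp.emeasure_pair_measure_alt) (rule measurable_sets[OF gm Ev_sets])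
  also have "\<dots> = (\<integral>\<^sup>+b. emeasure Sq (Ev (x + (if b then 1 else -1))) \<partial>Bm)"
  proof (rule nn_integral_cong)
    fix b :: bool
    have "Pair b -` (?g -` Ev x \<inter> space (Bm \<Otimes>\<^sub>M Sq)) = Ev (x + (if b then 1 else -1))"
      using Ev_case_nat[OF x, of b] by (auto simp: space_pair_measure Ev_def)
    thus "emeasure Sq (Pair b -` (?g -` Ev x \<inter> space (Bm \<Otimes>\<^sub>M Sq))) = emeasure Sq (Ev (x + (if b then 1 else -1)))"
      by simp
  qed
  also have "\<dots> = emeasure Sq (Ev (x + 1)) * ennreal (1/2) + emeasure Sq (Ev (x - 1)) * ennreal (1/2)"
    by (subst nn_integral_measure_pmf_finite) (auto simp: UNIV_bool)
  finally show ?thesis .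
qed

definition hv :: "int \<Rightarrow> real" where "hv x = measure Sq (Ev x)"

lemma hv_rec: "0 < x \<Longrightarrow> hv x = (hv (x + 1) + hv (x - 1)) / 2"
proof -
  interpret Sp: prob_space Sq by (rule prob_Sq)
  assume x: "0 < x"
  have "ennreal (hv x) = ennreal (hv (x + 1)) * ennreal (1/2) + ennreal (hv (x - 1)) * ennreal (1/2)"
    using Ev_rec[OF x] unfolding hv_def by (simp add: Sp.emeasure_eq_measure)
  also have "\<dots> = ennreal ((hv (x + 1) + hv (x - 1)) / 2)"
  proof -
    have a: "0 \<le> hv (x + 1)" "0 \<le> hv (x - 1)" by (simp_all add: hv_def)
    have "ennreal (hv (x + 1)) * ennreal (1/2) = ennreal (hv (x + 1) * (1/2))"
      using ennreal_mult[of "hv (x + 1)" "1/2"] a by simp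
    moreover have "ennreal (hv (x - 1)) * ennreal (1/2) = ennreal (hv (x - 1) * (1/2))"
      using ennreal_mult[of "hv (x - 1)" "1/2"] a by simp
    moreover have "ennreal (hv (x + 1) * (1/2)) + ennreal (hv (x - 1) * (1/2)) = ennreal (hv (x + 1) * (1/2) + hv (x - 1) * (1/2))"
      using a by (intro ennreal_plus[symmetric]) simp_all
    ultimately show ?thesis by (simp add: field_simps)
  qed
  finally show ?thesis by (subst (asm) ennreal_inj) (auto simp: hv_def)
qed

lemma hv_0: "hv 0 = 0" by (simp add: hv_def Ev_empty)

lemma hv_lin: "hv (int n) = real n * hv 1 \<and> hv (int (Suc n)) = real (Suc n) * hv 1"
proof (induction n)
  case 0 thus ?case by (simp add: hv_0)
next
  case (Suc n)
  have "hv (int (Suc n)) = (hv (int (Suc n) + 1) + hv (int (Suc n) - 1)) / 2"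
    by (rule hv_rec) simp
  hence "hv (int (Suc (Suc n))) = 2 * hv (int (Suc n)) - hv (int n)"
    by (simp add: add.commute)
  thus ?case using Suc by (simp add: algebra_simps)
qed

lemma hv_zero: "hv (int n) = 0"
proof -
  interpret Sp: prob_space Sq by (rule prob_Sq)
  have le1: "hv x \<le> 1" for x unfolding hv_def by (rule Sp.prob_le_1)
  have ge0: "0 \<le> hv x" for x unfolding hv_def by simp
  have "hv 1 = 0"
  proof (rule ccontr)
    assume "hv 1 \<noteq> 0"
    hence "0 < hv 1" using ge0[of 1] by simp
    then obtain m where "1 < real m * hv 1" using ex_less_of_nat_mult by blast
    thus False using hv_lin[of m] le1[of "int m"] by simp
  qed
  thus ?thesis using hv_lin[of n] by simp
qed

lemma AE_walk: "AE y in Sq. \<forall>M::nat. \<exists>n. Wy y n \<le> - int M"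
proof (subst AE_all_countable, intro allI)
  fix M :: nat
  interpret Sp: prob_space Sq by (rule prob_Sq)
  have "Ev (int M) \<in> null_sets Sq"
    using hv_zero[of M] unfolding hv_def by (intro null_setsI) (simp_all add: Sp.emeasure_eq_measure)
  moreover have "{y \<in> space Sq. \<not> (\<exists>n. Wy y n \<le> - int M)} \<subseteq> Ev (int M)"
  proof
    fix y assume y: "y \<in> {y \<in> space Sq. \<not> (\<exists>n. Wy y n \<le> - int M)}"
    have "0 < int M + Wy y n" for n
    proof -
      have "\<not> Wy y n \<le> - int M" using y by blast
      thus ?thesis by linarith
    qed
    thus "y \<in> Ev (int M)" by (simp add: Ev_def)
  qed
  ultimately show "AE y in Sq. \<exists>n. Wy y n \<le> - int M" by (rule AE_I')
qed


abbreviation Tm :: "(bool list \<Rightarrow> bool) measure" where "Tm \<equiv> PiM UNIV (\<lambda>_. Bm)"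

lemma space_Tm[simp]: "space Tm = UNIV" by (simp add: space_PiM)
lemma prob_Tm: "prob_space Tm" by (rule prob_space_PiM) (rule prob_Bm)

definition jn :: "bool \<times> (bool list \<Rightarrow> bool) \<times> (bool list \<Rightarrow> bool) \<Rightarrow> bool list \<Rightarrow> bool" where
  "jn p u = (case u of [] \<Rightarrow> fst p | c # v \<Rightarrow> if c then snd (snd p) v else fst (snd p) v)"

lemma mem_prod_emb_T: "f \<in> prod_emb UNIV (\<lambda>_. Bm) J (Pi\<^sub>E J A) \<longleftrightarrow> (\<forall>j\<in>J. f j \<in> A j)"
  by (auto simp: prod_emb_def space_PiM PiE_iff)

lemma meas_coordT[measurable]: "(\<lambda>y. y i) \<in> measurable Tm (count_space UNIV)"
proof -
  have "(\<lambda>y. y i) \<in> measurable Tm Bm" by (rule measurable_component_singleton) simp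
  moreover have "measurable Tm Bm = measurable Tm (count_space UNIV)"
    by (rule measurable_cong_sets) simp_all
  ultimately show ?thesis by simp
qed

lemma jn_meas: "jn \<in> measurable (Bm \<Otimes>\<^sub>M (Tm \<Otimes>\<^sub>M Tm)) Tm"
proof (rule measurable_PiM_single')
  fix u :: "bool list"
  show "(\<lambda>p. jn p u) \<in> measurable (Bm \<Otimes>\<^sub>M (Tm \<Otimes>\<^sub>M Tm)) Bm"
  proof (cases u)
    case Nil
    thus ?thesis by (simp add: jn_def)
  next
    case (Cons c v)
    show ?thesis
    proof (cases c)
      case True
      have "(\<lambda>p. snd (snd p) v) \<in> measurable (Bm \<Otimes>\<^sub>M (Tm \<Otimes>\<^sub>M Tm)) Bm"
        by (rule measurable_compose[OF measurable_snd measurable_compose[OF measurable_snd measurable_component_singleton]]) simp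
      thus ?thesis using Cons True by (simp add: jn_def)
    next
      case False
      have "(\<lambda>p. fst (snd p) v) \<in> measurable (Bm \<Otimes>\<^sub>M (Tm \<Otimes>\<^sub>M Tm)) Bm"
        by (rule measurable_compose[OF measurable_snd measurable_compose[OF measurable_fst measurable_component_singleton]]) simp
      thus ?thesis using Cons False by (simp add: jn_def)
    qed
  qed
qed (simp add: space_PiM)

lemma prod_split_list:
  fixes g :: "bool list \<Rightarrow> ennreal"
  assumes J: "finite J"
  shows "(\<Prod>j\<in>J. g j) = (if [] \<in> J then g [] else 1) *
     ((\<Prod>v\<in>{v. False # v \<in> J}. g (False # v)) * (\<Prod>v\<in>{v. True # v \<in> J}. g (True # v)))"
proof -
  let ?L = "{v. False # v \<in> J}" and ?R = "{v. True # v \<in> J}"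
  have fL: "finite ?L" "finite ?R" using J by (auto intro: finite_vimageI[of J "Cons _", unfolded vimage_def])
  have Jeq: "J = (J \<inter> {[]}) \<union> ((Cons False ` ?L) \<union> (Cons True ` ?R))"
    by (auto simp: image_iff) (metis list.exhaust)
  have "(\<Prod>j\<in>J. g j) = (\<Prod>j\<in>J \<inter> {[]}. g j) * (\<Prod>j\<in>(Cons False ` ?L) \<union> (Cons True ` ?R). g j)"
    using J fL by (subst Jeq, subst prod.union_disjoint) auto
  also have "(\<Prod>j\<in>(Cons False ` ?L) \<union> (Cons True ` ?R). g j) =
     (\<Prod>j\<in>Cons False ` ?L. g j) * (\<Prod>j\<in>Cons True ` ?R. g j)"
    using fL by (intro prod.union_disjoint) auto
  also have "(\<Prod>j\<in>Cons False ` ?L. g j) = (\<Prod>v\<in>?L. g (False # v))"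
    by (subst prod.reindex) (auto simp: inj_on_def)
  also have "(\<Prod>j\<in>Cons True ` ?R. g j) = (\<Prod>v\<in>?R. g (True # v))"
    by (subst prod.reindex) (auto simp: inj_on_def)
  also have "(\<Prod>j\<in>J \<inter> {[]}. g j) = (if [] \<in> J then g [] else 1)"
    by (auto simp: Int_absorb1 Int_absorb2 Int_insert_right)
  finally show ?thesis .
qed

lemma join_T: "distr (Bm \<Otimes>\<^sub>M (Tm \<Otimes>\<^sub>M Tm)) Tm jn = Tm"
proof (rule measure_eqI_PiM_infinite[symmetric, OF refl])
  interpret T: prob_space Tm by (rule prob_Tm)
  interpret TT: pair_prob_space Tm Tm by unfold_locales
  interpret BB: prob_space Bm by (rule prob_Bm)
  show "finite_measure Tm" by unfold_locales
  fix A J assume J: "finite J" "J \<subseteq> (UNIV :: bool list set)" and A: "\<And>i. i \<in> J \<Longrightarrow> A i \<in> sets Bm"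
  let ?X = "prod_emb UNIV (\<lambda>_. Bm) J (Pi\<^sub>E J A)"
  let ?L = "{v. False # v \<in> J}" and ?R = "{v. True # v \<in> J}"
  have fL: "finite ?L" "finite ?R" using J by (auto intro: finite_vimageI[of J "Cons _", unfolded vimage_def])
  let ?A0 = "if [] \<in> J then A [] else UNIV"
  let ?XL = "prod_emb UNIV (\<lambda>_. Bm) ?L (Pi\<^sub>E ?L (\<lambda>v. A (False # v)))"
  let ?XR = "prod_emb UNIV (\<lambda>_. Bm) ?R (Pi\<^sub>E ?R (\<lambda>v. A (True # v)))"
  have pre: "jn -` ?X \<inter> space (Bm \<Otimes>\<^sub>M (Tm \<Otimes>\<^sub>M Tm)) = ?A0 \<times> (?XL \<times> ?XR)"
  proof (intro set_eqI iffI)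
    fix p assume "p \<in> jn -` ?X \<inter> space (Bm \<Otimes>\<^sub>M (Tm \<Otimes>\<^sub>M Tm))"
    hence h: "\<forall>j\<in>J. jn p j \<in> A j" by (simp add: mem_prod_emb_T)
    obtain b l r where p: "p = (b, l, r)" by (cases p) auto
    show "p \<in> ?A0 \<times> (?XL \<times> ?XR)"
      using h unfolding p by (auto simp: mem_prod_emb_T jn_def)
  next
    fix p assume h: "p \<in> ?A0 \<times> (?XL \<times> ?XR)"
    obtain b l r where p: "p = (b, l, r)" by (cases p) auto
    have "\<forall>j\<in>J. jn p j \<in> A j"
    proof
      fix j assume j: "j \<in> J"
      show "jn p j \<in> A j"
      proof (cases j)
        case Nil thus ?thesis using h j p by (simp add: jn_def)
      next
        case (Cons c v) thus ?thesis using h j p by (cases c) (auto simp: jn_def mem_prod_emb_T)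
      qed
    qed
    thus "p \<in> jn -` ?X \<inter> space (Bm \<Otimes>\<^sub>M (Tm \<Otimes>\<^sub>M Tm))"
      by (simp add: mem_prod_emb_T space_pair_measure)
  qed
  have sX: "?X \<in> sets Tm" using J A by (intro sets_PiM_I) auto
  have sL: "?XL \<in> sets Tm" "?XR \<in> sets Tm" using fL by (auto intro!: sets_PiM_I)
  have "emeasure (distr (Bm \<Otimes>\<^sub>M (Tm \<Otimes>\<^sub>M Tm)) Tm jn) ?X = emeasure (Bm \<Otimes>\<^sub>M (Tm \<Otimes>\<^sub>M Tm)) (?A0 \<times> (?XL \<times> ?XR))"
    using emeasure_distr[OF jn_meas sX] pre by simp
  also have "\<dots> = emeasure Bm ?A0 * emeasure (Tm \<Otimes>\<^sub>M Tm) (?XL \<times> ?XR)"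
    using sL by (intro TT.emeasure_pair_measure_Times) (auto simp: sets_pair_measure intro!: sigma_sets.Basic)
  also have "emeasure (Tm \<Otimes>\<^sub>M Tm) (?XL \<times> ?XR) = emeasure Tm ?XL * emeasure Tm ?XR"
    using sL by (rule T.emeasure_pair_measure_Times)
  also have "emeasure Tm ?XL = (\<Prod>v\<in>?L. emeasure Bm (A (False # v)))"
    using fL by (intro emeasure_PiM_emb prob_Bm) auto
  also have "emeasure Tm ?XR = (\<Prod>v\<in>?R. emeasure Bm (A (True # v)))"
    using fL by (intro emeasure_PiM_emb prob_Bm) auto
  also have "emeasure Bm ?A0 = (if [] \<in> J then emeasure Bm (A []) else 1)"
    using measure_pmf.emeasure_space_1[of "bernoulli_pmf (1/2)"] by simp
  also have "(if [] \<in> J then emeasure Bm (A []) else 1) *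
     ((\<Prod>v\<in>?L. emeasure Bm (A (False # v))) * (\<Prod>v\<in>?R. emeasure Bm (A (True # v)))) =
     (\<Prod>j\<in>J. emeasure Bm (A j))"
    by (rule prod_split_list[OF J(1), symmetric])
  also have "\<dots> = emeasure Tm ?X"
    using J A by (intro emeasure_PiM_emb[symmetric] prob_Bm) auto
  finally show "emeasure Tm ?X = emeasure (distr (Bm \<Otimes>\<^sub>M (Tm \<Otimes>\<^sub>M Tm)) Tm jn) ?X" ..
qed simp


lemma meas_coordT_pred[measurable]: "Measurable.pred Tm (\<lambda>t. t u)"
  using meas_coordT by simp

definition Dn :: "nat \<Rightarrow> (bool list \<Rightarrow> bool) set" where
  "Dn n = {t \<in> space Tm. \<exists>u. length u = n \<and> (\<forall>k<n. t (take k u))}"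

lemma Dn_sets[measurable]: "Dn n \<in> sets Tm"
  unfolding Dn_def by measurable

lemma jn_Dn: "jn (b, l, r) \<in> Dn (Suc n) \<longleftrightarrow> b \<and> (l \<in> Dn n \<or> r \<in> Dn n)"
proof
  assume "jn (b, l, r) \<in> Dn (Suc n)"
  then obtain u where u: "length u = Suc n" "\<forall>k<Suc n. jn (b, l, r) (take k u)" by (auto simp: Dn_def)
  then obtain c v where cv: "u = c # v" by (cases u) auto
  have "b" using u(2)[rule_format, of 0] by (simp add: jn_def)
  moreover have "\<forall>k<n. (if c then r else l) (take k v)"
    using u(2) cv by (auto simp: jn_def)
  ultimately show "b \<and> (l \<in> Dn n \<or> r \<in> Dn n)" using u(1) cv by (cases c) (auto simp: Dn_def)
next
  assume h: "b \<and> (l \<in> Dn n \<or> r \<in> Dn n)"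
  show "jn (b, l, r) \<in> Dn (Suc n)"
  proof (cases "l \<in> Dn n")
    case True
    then obtain v where v: "length v = n" "\<forall>k<n. l (take k v)" by (auto simp: Dn_def)
    have "\<forall>k<Suc n. jn (b, l, r) (take k (False # v))"
      using v h by (auto simp: jn_def less_Suc_eq_0_disj)
    thus ?thesis using v(1) by (auto simp: Dn_def intro!: exI[of _ "False # v"])
  next
    case False
    then obtain v where v: "length v = n" "\<forall>k<n. r (take k v)" using h by (auto simp: Dn_def)
    have "\<forall>k<Suc n. jn (b, l, r) (take k (True # v))"
      using v h by (auto simp: jn_def less_Suc_eq_0_disj)
    thus ?thesis using v(1) by (auto simp: Dn_def intro!: exI[of _ "True # v"])
  qed
qed

lemma Dn_rec: "measure Tm (Dn (Suc n)) = (1 - (1 - measure Tm (Dn n))^2) / 2"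
proof -
  interpret T: prob_space Tm by (rule prob_Tm)
  interpret TT: pair_prob_space Tm Tm by unfold_locales
  let ?p = "measure Tm (Dn n)"
  let ?Q = "(Dn n \<times> UNIV) \<union> (UNIV \<times> Dn n)"
  let ?C = "(UNIV - Dn n) \<times> (UNIV - Dn n)"
  have Qs: "?Q = space (Tm \<Otimes>\<^sub>M Tm) - ?C" by (auto simp: space_pair_measure)
  have "space Tm - Dn n \<in> sets Tm" by (rule sets.compl_sets) (rule Dn_sets)
  hence cD: "UNIV - Dn n \<in> sets Tm" by simp
  have Cs: "?C \<in> sets (Tm \<Otimes>\<^sub>M Tm)" by (intro pair_measureI cD)
  have Qsets: "?Q \<in> sets (Tm \<Otimes>\<^sub>M Tm)" unfolding Qs using Cs by auto
  have "emeasure (Tm \<Otimes>\<^sub>M Tm) ?C = emeasure Tm (UNIV - Dn n) * emeasure Tm (UNIV - Dn n)"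
    by (rule T.emeasure_pair_measure_Times[OF cD cD])
  also have "emeasure Tm (UNIV - Dn n) = ennreal (1 - ?p)"
    using T.prob_compl[OF Dn_sets, of n] by (simp add: T.emeasure_eq_measure)
  finally have "TT.prob ?C = (1 - ?p) * (1 - ?p)"
    by (simp add: TT.emeasure_eq_measure ennreal_mult''[symmetric] del: ennreal_mult'')
  hence pQ: "TT.prob ?Q = 1 - (1 - ?p)^2" unfolding Qs using TT.prob_compl[OF Cs] by (simp add: power2_eq_square)
  have pre: "jn -` Dn (Suc n) \<inter> space (Bm \<Otimes>\<^sub>M (Tm \<Otimes>\<^sub>M Tm)) = {True} \<times> ?Q"
    by (auto simp: jn_Dn space_pair_measure)
  have "emeasure Tm (Dn (Suc n)) = emeasure (distr (Bm \<Otimes>\<^sub>M (Tm \<Otimes>\<^sub>M Tm)) Tm jn) (Dn (Suc n))"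
    by (simp add: join_T)
  also have "\<dots> = emeasure (Bm \<Otimes>\<^sub>M (Tm \<Otimes>\<^sub>M Tm)) ({True} \<times> ?Q)"
    using emeasure_distr[OF jn_meas Dn_sets] pre by simp
  also have "\<dots> = emeasure Bm {True} * emeasure (Tm \<Otimes>\<^sub>M Tm) ?Q"
    using Qsets by (intro TT.emeasure_pair_measure_Times) simp
  also have "\<dots> = ennreal (1/2) * ennreal (1 - (1 - ?p)^2)"
    using pQ by (simp add: TT.emeasure_eq_measure emeasure_pmf_single)
  also have "\<dots> = ennreal ((1 - (1 - ?p)^2) / 2)"
  proof -
    have "0 \<le> 1 - (1 - ?p)^2" using pQ by (metis measure_nonneg)
    thus ?thesis using ennreal_mult[of "1/2" "1 - (1 - ?p)^2"] by simp
  qed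
  finally have e: "ennreal (measure Tm (Dn (Suc n))) = ennreal ((1 - (1 - ?p)^2) / 2)"
    by (simp add: T.emeasure_eq_measure)
  have nn: "0 \<le> (1 - (1 - ?p)^2) / 2" using pQ by (metis measure_nonneg zero_le_divide_iff zero_le_numeral)
  show ?thesis using ennreal_inj[OF measure_nonneg nn, of Tm "Dn (Suc n)"] e by blast
qed

lemma quad_id: "(q - q^2/2) - (p - p^2/2) = (q - p) * (1 - (q + p)/2)" for q p :: real
  by (simp add: power2_eq_square field_simps)

lemma frac_id: "0 < a \<Longrightarrow> 2 / (a + 1) - (2 / a - (2 / a)^2 / 2) = 2 / (a^2 * (a + 1))" for a :: real
  by (simp add: field_simps power2_eq_square)

lemma quad2: "(1 - (1 - p)^2) / 2 = p - p^2/2" for p :: real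
  by (simp add: field_simps power2_eq_square)

lemma p_bound: "measure Tm (Dn n) \<le> 2 / (real n + 2)"
proof (induction n)
  interpret T: prob_space Tm by (rule prob_Tm)
  case 0 thus ?case using T.prob_le_1[of "Dn 0"] by simp
next
  interpret T: prob_space Tm by (rule prob_Tm)
  case (Suc n)
  let ?p = "measure Tm (Dn n)" and ?a = "real n + 2"
  let ?q = "2 / ?a"
  have p0: "0 \<le> ?p" by simp
  have q1: "?q \<le> 1" by simp
  have mono: "?p - ?p^2/2 \<le> ?q - ?q^2/2"
  proof -
    have "(?q - ?q^2/2) - (?p - ?p^2/2) = (?q - ?p) * (1 - (?q + ?p)/2)"
      by (rule quad_id)
    moreover have "0 \<le> ?q - ?p" using Suc by simp
    moreover have "0 \<le> 1 - (?q + ?p)/2"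
    proof -
      have "?q + ?p \<le> 2" using Suc q1 T.prob_le_1[of "Dn n"] by linarith
      thus ?thesis by simp
    qed
    ultimately show ?thesis by (metis diff_ge_0_iff_ge mult_nonneg_nonneg)
  qed
  have fq: "?q - ?q^2/2 \<le> 2 / (real (Suc n) + 2)"
  proof -
    have a: "?a > 1" by simp
    have "2 / (?a + 1) - (?q - ?q^2/2) = 2 / (?a^2 * (?a + 1))"
      by (rule frac_id) simp
    moreover have "0 \<le> 2 / (?a^2 * (?a + 1))" by simp
    moreover have e: "2 / (real (Suc n) + 2) = 2 / (?a + 1)" by simp
    ultimately show ?thesis by linarith
  qed
  have "measure Tm (Dn (Suc n)) = ?p - ?p^2/2"
    by (simp only: Dn_rec quad2)
  thus ?case using mono fq by linarith
qed

definition treeset :: "(bool list \<Rightarrow> bool) \<Rightarrow> bool list set" where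
  "treeset t = {u. \<forall>k<length u. t (take k u)}"

lemma treeset_finite: "t \<notin> Dn n \<Longrightarrow> finite (treeset t)"
proof -
  assume t: "t \<notin> Dn n"
  have "treeset t \<subseteq> {xs. set xs \<subseteq> UNIV \<and> length xs \<le> n}"
  proof
    fix u assume u: "u \<in> treeset t"
    have "length u < n"
    proof (rule ccontr)
      assume "\<not> length u < n"
      hence "length (take n u) = n" by simp
      moreover have "\<forall>k<n. t (take k (take n u))" using u \<open>\<not> length u < n\<close> by (auto simp: treeset_def)
      ultimately have "t \<in> Dn n" unfolding Dn_def space_Tm by blast
      thus False using t by simp
    qed
    thus "u \<in> {xs. set xs \<subseteq> UNIV \<and> length xs \<le> n}" by simp
  qed
  moreover have "finite {xs :: bool list. set xs \<subseteq> UNIV \<and> length xs \<le> n}"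
    by (rule finite_lists_length_le) simp
  ultimately show ?thesis by (rule finite_subset)
qed

lemma AE_tree_finite: "AE t in Tm. finite (treeset t)"
proof -
  interpret T: prob_space Tm by (rule prob_Tm)
  let ?N = "\<Inter>n. Dn n"
  have Ns: "?N \<in> sets Tm" by measurable
  have le: "measure Tm ?N \<le> 2 / (real n + 2)" for n
  proof -
    have "?N \<subseteq> Dn n" by blast
    thus ?thesis using T.finite_measure_mono[OF _ Dn_sets, of ?N n] p_bound[of n] by linarith
  qed
  have "measure Tm ?N = 0"
  proof (rule ccontr)
    assume "measure Tm ?N \<noteq> 0"
    hence m: "0 < measure Tm ?N" by (simp add: less_le)
    then obtain n where "2 < real n * measure Tm ?N" using ex_less_of_nat_mult by blast
    hence "2 < (real n + 2) * measure Tm ?N" using m by (simp add: distrib_right)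
    moreover have "(real n + 2) * measure Tm ?N \<le> 2" using le[of n] by (simp add: field_simps)
    ultimately show False by simp
  qed
  hence "?N \<in> null_sets Tm" using Ns by (simp add: T.emeasure_eq_measure null_setsI)
  moreover have "{t \<in> space Tm. \<not> finite (treeset t)} \<subseteq> ?N"
    using treeset_finite by blast
  ultimately show ?thesis by (rule AE_I')
qed


lemma AE_rt_walk: "AE \<omega> in rt_space. \<forall>M::nat. \<exists>n. W \<omega> n \<le> - int M"
proof -
  let ?phi = "\<lambda>\<omega>::omega. \<lambda>n\<in>(UNIV::nat set). \<omega> (Inl (n + 2))"
  have d: "distr rt_space Sq ?phi = Sq"
    unfolding rt_space_def
    using distr_PiM_reindex[of UNIV "\<lambda>_. Bm" "\<lambda>n::nat. (Inl (n + 2) :: nat + nat \<times> bool list)" UNIV]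
    by (simp add: prob_Bm inj_on_def)
  have m: "?phi \<in> measurable rt_space Sq"
    unfolding rt_space_def by measurable
  have "AE y in distr rt_space Sq ?phi. \<forall>M::nat. \<exists>n. Wy y n \<le> - int M"
    unfolding d by (rule AE_walk)
  hence "AE \<omega> in rt_space. \<forall>M::nat. \<exists>n. Wy (?phi \<omega>) n \<le> - int M"
    by (rule AE_distrD[OF m])
  moreover have "Wy (?phi \<omega>) n = W \<omega> n" for \<omega> n by (simp add: Wy_def W_def Xv_def)
  ultimately show ?thesis by simp
qed

lemma AE_rt_GW: "AE \<omega> in rt_space. finite (GW \<omega> i)"
proof -
  let ?psi = "\<lambda>\<omega>::omega. \<lambda>u\<in>(UNIV::bool list set). \<omega> (Inr (i, u))"
  have d: "distr rt_space Tm ?psi = Tm"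
    unfolding rt_space_def
    using distr_PiM_reindex[of UNIV "\<lambda>_. Bm" "\<lambda>u::bool list. (Inr (i, u) :: nat + nat \<times> bool list)" UNIV]
    by (simp add: prob_Bm inj_on_def)
  have m: "?psi \<in> measurable rt_space Tm"
    unfolding rt_space_def by measurable
  have "AE t in distr rt_space Tm ?psi. finite (treeset t)"
    unfolding d by (rule AE_tree_finite)
  hence "AE \<omega> in rt_space. finite (treeset (?psi \<omega>))"
    by (rule AE_distrD[OF m])
  moreover have "treeset (?psi \<omega>) = GW \<omega> i" for \<omega> by (simp add: treeset_def GW_def)
  ultimately show ?thesis by simp
qed

theorem mainTheorem1:
  shows "AE \<omega> in rt_space.
     (\<forall>\<kappa>\<in>corners (Aset \<omega>). \<exists>\<kappa>'\<in>corners (Aset \<omega>).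
        cprec (Aset \<omega>) \<kappa> \<kappa>' \<and>
        label (Aset \<omega>) \<kappa>' \<le> label (Aset \<omega>) \<kappa> -
          (if cprec (Aset \<omega>) \<kappa> (rho (Aset \<omega>)) \<and> cpreceq (Aset \<omega>) (rho (Aset \<omega>)) \<kappa>'
           then 6 else 0))
   \<and> (\<forall>\<kappa>\<in>corners (Aset \<omega>). is_bud_corner (Aset \<omega>) \<kappa> \<longrightarrow> attach_corner (Aset \<omega>) \<kappa> \<noteq> None)"
proof -
  have "AE \<omega> in rt_space. \<forall>i. finite (GW \<omega> i)"
    using AE_rt_GW by (subst AE_all_countable) blast
  moreover have "AE \<omega> in rt_space. \<forall>M::nat. \<exists>n. W \<omega> n \<le> - int M" by (rule AE_rt_walk)
  ultimately show ?thesis by eventually_elim (rule det_main)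
qed


end
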